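(* Let $q\ge5$. (i) The union of the $q+1$ $\Gamma$-planes and the $q^2+q$ $2_{\mathcal C}$-planes can be partitioned into $q+1$ pencils of planes such that each pencil consists of one $\Gamma$-plane and $q$ $2_{\mathcal C}$-planes and the axis of the pencil is a tangent to $\mathcal C$. (ii) Among $E_{n\Gamma}$-lines, only lines lying in $2_{\mathcal C}$-planes can intersect tangents; if $q\not\equiv0\pmod3$, $E_{n\Gamma}$-lines lying in $2_{\mathcal C}$-planes intersect tangents in $T$-points, and if $q\equiv0\pmod3$ they intersect tangents in $TO$-points. (iii) For every $E_{n\Gamma}$-line $\ell$, the number of $T$-points on $\ell$ equals the number of $2_{\mathcal C}$-planes through $\ell$ if $q\not\equiv0\pmod 3$, and the number of $TO$-points on $\ell$ equals the number of $2_{\mathcal C}$-planes through $\ell$ if $q\equiv0\pmod3$.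
   Context: Let $\mathbb F_q$ be the field of order $q$ and $\mathrm{PG}(3,q)$ the projective space with points $\mathbf P(x_0,x_1,x_2,x_3)$. For $t\in\mathbb F_q$ put $P(t)=\mathbf P(t^3,t^2,t,1)$, and $P(\infty)=\mathbf P(1,0,0,0)$; the twisted cubic is $\mathcal C=\{P(t):t\in\mathbb F_q\cup\{\infty\}\}$. The osculating plane at $P(t)$ is $x_0-3tx_1+3t^2x_2-t^3x_3=0$ ($t\in\mathbb F_q$) and $x_3=0$ at $P(\infty)$; these are the $\Gamma$-planes. The tangent at $P(t)$, $t\in\mathbb F_q$, is the line through $P(t)$ and $\mathbf P(3t^2,2t,1,0)$; at $P(\infty)$ it is the line through $\mathbf P(1,0,0,0),\mathbf P(0,1,0,0)$. A real chord joins two distinct points of $\mathcal C$; an imaginary chord joins $P(\tau),P(\tau^q)$, $\tau\in\mathbb F_{q^2}\setminus\mathbb F_q$; chords are real chords, tangents and imaginary chords. An axis is the intersection of two distinct osculating planes at points of $\mathcal C$, or of the osculating planes at conjugate points $P(\tau),P(\tau^q)$. An $E_{n\Gamma}$-line is a line with no point of $\mathcal C$, not contained in a $\Gamma$-plane, which is neither a chord nor an axis. A $2_{\mathcal C}$-plane is a plane containing exactly two points of $\mathcal C$. For $q\not\equiv0\pmod3$, $T$-points are points off $\mathcal C$ on a tangent; for $q\equiv0\pmod3$, $TO$-points are points off $\mathcal C$ on a tangent lying in exactly one $\Gamma$-plane. *)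

theory Defs
  imports Main "HOL-Library.Cardinality"
begin

type_synonym 'a v4 = "'a \<times> 'a \<times> 'a \<times> 'a"

definition v0 :: "'a::field v4" where "v0 = (0,0,0,0)"

definition vsc :: "'a::field \<Rightarrow> 'a v4 \<Rightarrow> 'a v4" where
  "vsc c v = (case v of (x0,x1,x2,x3) \<Rightarrow> (c*x0, c*x1, c*x2, c*x3))"

definition vadd :: "'a::field v4 \<Rightarrow> 'a v4 \<Rightarrow> 'a v4" where
  "vadd u v = (case u of (x0,x1,x2,x3) \<Rightarrow> case v of (y0,y1,y2,y3) \<Rightarrow>
      (x0+y0, x1+y1, x2+y2, x3+y3))"

definition vdot :: "'a::field v4 \<Rightarrow> 'a v4 \<Rightarrow> 'a" where
  "vdot u v = (case u of (x0,x1,x2,x3) \<Rightarrow> case v of (y0,y1,y2,y3) \<Rightarrow>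
      x0*y0 + x1*y1 + x2*y2 + x3*y3)"

definition map4 :: "('a \<Rightarrow> 'b) \<Rightarrow> 'a v4 \<Rightarrow> 'b v4" where
  "map4 f v = (case v of (x0,x1,x2,x3) \<Rightarrow> (f x0, f x1, f x2, f x3))"

section \<open>PG(3,F): points = 1-dim subspaces, lines = 2-dim subspaces, planes = 3-dim subspaces\<close>

definition pt :: "'a::field v4 \<Rightarrow> 'a v4 set" where
  "pt v = {vsc c v | c. True}"

definition PG_points :: "'a::field v4 set set" where
  "PG_points = {pt v | v. v \<noteq> v0}"

definition line_of :: "'a::field v4 \<Rightarrow> 'a v4 \<Rightarrow> 'a v4 set" where
  "line_of u v = {vadd (vsc a u) (vsc b v) | a b. True}"

definition indep2 :: "'a::field v4 \<Rightarrow> 'a v4 \<Rightarrow> bool" where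
  "indep2 u v \<longleftrightarrow> (\<forall>a b. vadd (vsc a u) (vsc b v) = v0 \<longrightarrow> a = 0 \<and> b = 0)"

definition PG_lines :: "'a::field v4 set set" where
  "PG_lines = {line_of u v | u v. indep2 u v}"

definition plane_of :: "'a::field v4 \<Rightarrow> 'a v4 set" where
  "plane_of a = {x. vdot a x = 0}"

definition PG_planes :: "'a::field v4 set set" where
  "PG_planes = {plane_of a | a. a \<noteq> v0}"

text \<open>Incidence: a point/line X lies in a line/plane Y iff X \<subseteq> Y (as subspaces).\<close>

definition pencil :: "'a::field v4 set \<Rightarrow> 'a v4 set set" where
  "pencil L = {\<pi> \<in> PG_planes. L \<subseteq> \<pi>}"

definition cv :: "'a::field \<Rightarrow> 'a v4" where
  "cv t = (t^3, t^2, t, 1)"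

definition Pt :: "'a::field \<Rightarrow> 'a v4 set" where
  "Pt t = pt (cv t)"

definition Pinf :: "'a::field v4 set" where
  "Pinf = pt (1,0,0,0)"

definition twisted_cubic :: "'a::field v4 set set" where
  "twisted_cubic = range Pt \<union> {Pinf}"

definition osc_vec :: "'a::field \<Rightarrow> 'a v4" where
  "osc_vec t = (1, -3*t, 3*t^2, -(t^3))"

definition osc_plane :: "'a::field \<Rightarrow> 'a v4 set" where
  "osc_plane t = plane_of (osc_vec t)"

definition osc_inf :: "'a::field v4 set" where
  "osc_inf = plane_of (0,0,0,1)"

definition Gamma_planes :: "'a::field v4 set set" where
  "Gamma_planes = range osc_plane \<union> {osc_inf}"

definition tangent :: "'a::field \<Rightarrow> 'a v4 set" where
  "tangent t = line_of (cv t) (3*t^2, 2*t, 1, 0)"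

definition tangent_inf :: "'a::field v4 set" where
  "tangent_inf = line_of (1,0,0,0) (0,1,0,0)"

definition tangents :: "'a::field v4 set set" where
  "tangents = range tangent \<union> {tangent_inf}"

definition real_chord :: "'a::field v4 set \<Rightarrow> bool" where
  "real_chord L \<longleftrightarrow> L \<in> PG_lines \<and>
     (\<exists>P\<in>twisted_cubic. \<exists>Q\<in>twisted_cubic. P \<noteq> Q \<and> P \<subseteq> L \<and> Q \<subseteq> L)"

text \<open>The quadratic extension F_{q^2} is given by an embedding emb of F_q into a
  field 'b with q^2 elements.  The extension of an F_q-line L to F_{q^2} is the
  F_{q^2}-span of its vectors.\<close>

definition field_emb :: "('a::field \<Rightarrow> 'b::field) \<Rightarrow> bool" where
  "field_emb emb \<longleftrightarrow> (\<forall>x y. emb (x + y) = emb x + emb y \<and> emb (x * y) = emb x * emb y)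
                      \<and> emb 1 = 1"

definition ext_line :: "('a::field \<Rightarrow> 'b::field) \<Rightarrow> 'a v4 set \<Rightarrow> 'b v4 set" where
  "ext_line emb L = {vadd (vsc a (map4 emb u)) (vsc b (map4 emb v)) | u v a b. u \<in> L \<and> v \<in> L}"

definition imag_chord :: "('a::{field,finite} \<Rightarrow> 'b::field) \<Rightarrow> 'a v4 set \<Rightarrow> bool" where
  "imag_chord emb L \<longleftrightarrow> L \<in> PG_lines \<and>
     (\<exists>\<tau>. \<tau> \<notin> range emb \<and> cv \<tau> \<in> ext_line emb L \<and> cv (\<tau> ^ CARD('a)) \<in> ext_line emb L)"

definition chord :: "('a::{field,finite} \<Rightarrow> 'b::field) \<Rightarrow> 'a v4 set \<Rightarrow> bool" where
  "chord emb L \<longleftrightarrow> real_chord L \<or> L \<in> tangents \<or> imag_chord emb L"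

definition real_axis :: "'a::field v4 set \<Rightarrow> bool" where
  "real_axis L \<longleftrightarrow> (\<exists>O1\<in>Gamma_planes. \<exists>O2\<in>Gamma_planes. O1 \<noteq> O2 \<and> L = O1 \<inter> O2)"

text \<open>Imaginary axis: the F_{q^2}-extension of L lies in the osculating planes at the
  conjugate points P(tau), P(tau^q) (hence equals their intersection).\<close>

definition imag_axis :: "('a::{field,finite} \<Rightarrow> 'b::field) \<Rightarrow> 'a v4 set \<Rightarrow> bool" where
  "imag_axis emb L \<longleftrightarrow> L \<in> PG_lines \<and>
     (\<exists>\<tau>. \<tau> \<notin> range emb \<and>
        (\<forall>x\<in>L. vdot (osc_vec \<tau>) (map4 emb x) = 0 \<and>
                vdot (osc_vec (\<tau> ^ CARD('a))) (map4 emb x) = 0))"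

definition axis :: "('a::{field,finite} \<Rightarrow> 'b::field) \<Rightarrow> 'a v4 set \<Rightarrow> bool" where
  "axis emb L \<longleftrightarrow> real_axis L \<or> imag_axis emb L"

definition EnGamma :: "('a::{field,finite} \<Rightarrow> 'b::field) \<Rightarrow> 'a v4 set \<Rightarrow> bool" where
  "EnGamma emb L \<longleftrightarrow> L \<in> PG_lines \<and> (\<forall>P\<in>twisted_cubic. \<not> P \<subseteq> L)
     \<and> (\<forall>G\<in>Gamma_planes. \<not> L \<subseteq> G) \<and> \<not> chord emb L \<and> \<not> axis emb L"

definition two_C_plane :: "'a::field v4 set \<Rightarrow> bool" where
  "two_C_plane \<pi> \<longleftrightarrow> \<pi> \<in> PG_planes \<and> card {P \<in> twisted_cubic. P \<subseteq> \<pi>} = 2"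

definition T_point :: "'a::field v4 set \<Rightarrow> bool" where
  "T_point p \<longleftrightarrow> p \<in> PG_points \<and> p \<notin> twisted_cubic \<and> (\<exists>T\<in>tangents. p \<subseteq> T)"

definition TO_point :: "'a::field v4 set \<Rightarrow> bool" where
  "TO_point p \<longleftrightarrow> T_point p \<and> card {G \<in> Gamma_planes. p \<subseteq> G} = 1"

end

theory Submission
  imports Defs "HOL-Algebra.Sylow" "HOL-Algebra.Multiplicative_Group"
begin

no_syntax
  "_Pi" :: "pttrn \<Rightarrow> 'a set \<Rightarrow> 'b set \<Rightarrow> ('a \<Rightarrow> 'b) set"
    (\<open>(\<open>indent=3 notation=\<open>binder \<Pi>\<in>\<close>\<close>\<Pi> _\<in>_./ _)\<close> 10)


lemma v0_eq: "v0 = (0,0,0,0)" by (simp add: v0_def)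
lemma vdot_simp[simp]: "vdot (a0,a1,a2,a3) (x0,x1,x2,x3) = a0*x0+a1*x1+a2*x2+a3*x3" by (simp add: vdot_def)
lemma vsc_simp[simp]: "vsc c (x0,x1,x2,x3) = (c*x0,c*x1,c*x2,c*x3)" by (simp add: vsc_def)
lemma vadd_simp[simp]: "vadd (x0,x1,x2,x3) (y0,y1,y2,y3) = (x0+y0,x1+y1,x2+y2,x3+y3)" by (simp add: vadd_def)

lemma vdot_vsc_r[simp]: "vdot a (vsc k x) = k * vdot a (x::'a::field v4)"
  by (cases a rule: prod_cases4, cases x rule: prod_cases4) (simp add: algebra_simps)
lemma vdot_vsc_l[simp]: "vdot (vsc k a) x = k * vdot a (x::'a::field v4)"
  by (cases a rule: prod_cases4, cases x rule: prod_cases4) (simp add: algebra_simps)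
lemma vdot_vadd_r[simp]: "vdot a (vadd x y) = vdot a x + vdot a (y::'a::field v4)"
  by (cases a rule: prod_cases4, cases x rule: prod_cases4, cases y rule: prod_cases4) (simp add: algebra_simps)
lemma vdot_vadd_l[simp]: "vdot (vadd x y) a = vdot x a + vdot y (a::'a::field v4)"
  by (cases a rule: prod_cases4, cases x rule: prod_cases4, cases y rule: prod_cases4) (simp add: algebra_simps)

lemma mem_pt: "x \<in> pt v \<longleftrightarrow> (\<exists>c. x = vsc c v)" by (auto simp: pt_def)
lemma self_pt: "(v::'a::field v4) \<in> pt v"
  unfolding mem_pt by (rule exI[of _ 1], cases v rule: prod_cases4) simp
lemma mem_line: "x \<in> line_of u v \<longleftrightarrow> (\<exists>a b. x = vadd (vsc a u) (vsc b v))" by (auto simp: line_of_def)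
lemma mem_plane: "x \<in> plane_of a \<longleftrightarrow> vdot a x = 0" by (simp add: plane_of_def)

lemma line_u: "(u::'a::field v4) \<in> line_of u v"
  unfolding mem_line by (rule exI[of _ 1], rule exI[of _ 0], cases u rule: prod_cases4, cases v rule: prod_cases4) simp
lemma line_v: "(v::'a::field v4) \<in> line_of u v"
  unfolding mem_line by (rule exI[of _ 0], rule exI[of _ 1], cases u rule: prod_cases4, cases v rule: prod_cases4) simp

lemma pt_sub_plane: "pt v \<subseteq> plane_of a \<longleftrightarrow> vdot a (v::'a::field v4) = 0"
proof
  assume "pt v \<subseteq> plane_of a" thus "vdot a v = 0" using self_pt[of v] by (auto simp: mem_plane)
qed (auto simp: mem_pt mem_plane)
lemma line_sub_plane: "line_of u v \<subseteq> plane_of a \<longleftrightarrow> vdot a (u::'a::field v4) = 0 \<and> vdot a v = 0"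
proof
  assume "line_of u v \<subseteq> plane_of a" thus "vdot a u = 0 \<and> vdot a v = 0"
    using line_u[of u v] line_v[of v u] by (auto simp: mem_plane)
qed (auto simp: mem_line mem_plane)

lemma line_scale: "z \<in> line_of u v \<Longrightarrow> vsc c z \<in> line_of u (v::'a::field v4)"
  unfolding mem_line
  apply clarify
  subgoal for a b by (rule exI[of _ "c*a"], rule exI[of _ "c*b"], cases u rule: prod_cases4, cases v rule: prod_cases4) (simp add: algebra_simps)
  done
lemma pt_sub_line: "pt z \<subseteq> line_of u v \<longleftrightarrow> z \<in> line_of u (v::'a::field v4)"
proof
  assume "pt z \<subseteq> line_of u v" thus "z \<in> line_of u v" using self_pt[of z] by auto
next
  assume "z \<in> line_of u v" thus "pt z \<subseteq> line_of u v" using line_scale unfolding pt_def by blast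
qed

lemma plane_scale: "k \<noteq> 0 \<Longrightarrow> plane_of (vsc k a) = plane_of (a::'a::field v4)"
  by (auto simp: plane_of_def)

lemma vsc_eq0: "vsc k (x::'a::field v4) = v0 \<longleftrightarrow> k = 0 \<or> x = v0"
  by (cases x rule: prod_cases4) (auto simp: v0_eq)

lemma pt_scale: "k \<noteq> 0 \<Longrightarrow> pt (vsc k x) = pt (x::'a::field v4)"
proof -
  assume k: "k \<noteq> 0"
  have "vsc c (vsc k x) = vsc (c*k) x" for c by (cases x rule: prod_cases4) (simp add: algebra_simps)
  moreover have "vsc c x = vsc (c/k) (vsc k x)" for c using k by (cases x rule: prod_cases4) (simp add: field_simps)
  ultimately show ?thesis unfolding pt_def by (metis (no_types, lifting))
qed

lemma line_in_plane: "u \<in> plane_of w \<Longrightarrow> v \<in> plane_of w \<Longrightarrow> line_of u v \<subseteq> plane_of (w::'a::field v4)"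
  by (simp add: line_sub_plane mem_plane)


definition CP :: "'a::field v4 set \<Rightarrow> 'a v4 set set" where
  "CP \<pi> = {P \<in> twisted_cubic. P \<subseteq> \<pi>}"

definition dv :: "'a::field \<Rightarrow> 'a v4" where "dv t = (3*t^2, 2*t, 1, 0)"
definition sig :: "'a::field \<Rightarrow> 'a \<Rightarrow> 'a v4" where "sig t r = (1, -(2*t+r), t^2+2*t*r, -(t^2*r))"
definition siginf :: "'a::field \<Rightarrow> 'a v4" where "siginf t = (0,1,-2*t,t^2)"
definition rho :: "'a::field \<Rightarrow> 'a v4" where "rho s = (0,0,1,-s)"

lemma Pt_sub_plane: "Pt x \<subseteq> plane_of c \<longleftrightarrow> vdot c (cv x) = 0"
  by (simp add: Pt_def pt_sub_plane)
lemma Pinf_sub_plane: "Pinf \<subseteq> plane_of (c0,c1,c2,c3) \<longleftrightarrow> (c0::'a::field) = 0"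
  by (simp add: Pinf_def pt_sub_plane)
lemma tangent_sub: "tangent t \<subseteq> plane_of c \<longleftrightarrow> vdot c (cv t) = 0 \<and> vdot c (dv t) = 0"
  by (simp add: tangent_def dv_def line_sub_plane)
lemma tangent_inf_sub: "tangent_inf \<subseteq> plane_of (c0,c1,c2,c3) \<longleftrightarrow> (c0::'a::field) = 0 \<and> c1 = 0"
  by (simp add: tangent_inf_def line_sub_plane)

lemma Pt_inj: "Pt s = Pt t \<Longrightarrow> s = (t::'a::field)"
proof -
  assume "Pt s = Pt t"
  hence "cv s \<in> pt (cv t)" using self_pt[of "cv s"] by (simp add: Pt_def)
  then obtain c where "cv s = vsc c (cv t)" by (auto simp: mem_pt)
  thus ?thesis by (simp add: cv_def)
qed
lemma Pt_Pinf: "Pt t \<noteq> Pinf"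
proof
  assume "Pt t = Pinf"
  hence "cv t \<in> pt (1,0,0,0)" using self_pt[of "cv t"] by (simp add: Pt_def Pinf_def)
  then obtain c where "cv t = vsc c (1,0,0,0)" by (auto simp: mem_pt)
  thus False by (simp add: cv_def)
qed

lemma CP_plane: "CP (plane_of (c0,c1,c2,c3)) =
   Pt ` {x. vdot (c0,c1,c2,c3) (cv x) = 0} \<union> (if (c0::'a::field) = 0 then {Pinf} else {})"
proof -
  have "CP (plane_of (c0,c1,c2,c3)) = Pt ` {x. Pt x \<subseteq> plane_of (c0,c1,c2,c3)} \<union> {P. P = Pinf \<and> Pinf \<subseteq> plane_of (c0,c1,c2,c3)}"
    unfolding CP_def twisted_cubic_def by blast
  also have "\<dots> = Pt ` {x. vdot (c0,c1,c2,c3) (cv x) = 0} \<union> {P. P = Pinf \<and> c0 = 0}"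
    by (simp only: Pt_sub_plane Pinf_sub_plane)
  finally show ?thesis by auto
qed

lemma ev_osc: "vdot (osc_vec t) (cv x) = (x-t)^3"
  by (simp add: osc_vec_def cv_def power3_eq_cube power2_eq_square algebra_simps)
lemma ev_sig: "vdot (sig t r) (cv x) = (x-t)^2*(x-r)"
  by (simp add: sig_def cv_def power3_eq_cube power2_eq_square algebra_simps)
lemma ev_siginf: "vdot (siginf t) (cv x) = (x-t)^2"
  by (simp add: siginf_def cv_def power3_eq_cube power2_eq_square algebra_simps)
lemma ev_rho: "vdot (rho s) (cv x) = x - s"
  by (simp add: rho_def cv_def)

lemma CP_osc: "CP (osc_plane t) = {Pt t}"
proof -
  have "CP (osc_plane t) = Pt ` {x. vdot (osc_vec t) (cv x) = 0}"
    unfolding osc_plane_def osc_vec_def by (subst CP_plane) simp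
  also have "{x. vdot (osc_vec t) (cv x) = 0} = {t}" by (auto simp: ev_osc)
  finally show ?thesis by simp
qed
lemma CP_osc_inf: "CP (osc_inf::'a::field v4 set) = {Pinf}"
proof -
  have "CP (osc_inf::'a v4 set) = Pt ` {x. vdot (0,0,0,1) (cv x) = (0::'a)} \<union> {Pinf}"
    unfolding osc_inf_def by (subst CP_plane) simp
  also have "{x. vdot (0,0,0,1) (cv x) = (0::'a)} = {}" by (auto simp: cv_def)
  finally show ?thesis by simp
qed
lemma CP_sig: "CP (plane_of (sig t r)) = {Pt t, Pt r}"
proof -
  have "CP (plane_of (sig t r)) = Pt ` {x. vdot (sig t r) (cv x) = 0}"
    unfolding sig_def by (subst CP_plane) simp
  also have "{x. vdot (sig t r) (cv x) = 0} = {t, r}" by (auto simp: ev_sig)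
  finally show ?thesis by simp
qed
lemma CP_siginf: "CP (plane_of (siginf t)) = {Pt t, Pinf}"
proof -
  have "CP (plane_of (siginf t)) = Pt ` {x. vdot (siginf t) (cv x) = 0} \<union> {Pinf}"
    unfolding siginf_def by (subst CP_plane) simp
  also have "{x. vdot (siginf t) (cv x) = 0} = {t}" by (auto simp: ev_siginf)
  finally show ?thesis by auto
qed
lemma CP_rho: "CP (plane_of (rho s)) = {Pt s, Pinf}"
proof -
  have "CP (plane_of (rho s)) = Pt ` {x. vdot (rho s) (cv x) = 0} \<union> {Pinf}"
    unfolding rho_def by (subst CP_plane) simp
  also have "{x. vdot (rho s) (cv x) = 0} = {s}" by (auto simp: ev_rho)
  finally show ?thesis by auto
qed

lemma plane_PG: "c \<noteq> v0 \<Longrightarrow> plane_of c \<in> PG_planes" unfolding PG_planes_def by blast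

lemma card_CP_Gamma: "G \<in> Gamma_planes \<Longrightarrow> card (CP G) = 1"
  by (auto simp: Gamma_planes_def CP_osc CP_osc_inf)

lemma card_two: "a \<noteq> b \<Longrightarrow> card {a, b} = 2" by simp

lemma two_C_iff: "two_C_plane \<pi> \<longleftrightarrow> \<pi> \<in> PG_planes \<and> card (CP \<pi>) = 2"
  by (simp add: two_C_plane_def CP_def)

lemma osc_PG: "osc_plane t \<in> PG_planes"
  unfolding osc_plane_def by (rule plane_PG) (simp add: osc_vec_def v0_eq)
lemma osc_inf_PG: "osc_inf \<in> PG_planes"
  unfolding osc_inf_def by (rule plane_PG) (simp add: v0_eq)
lemma Gamma_PG: "G \<in> Gamma_planes \<Longrightarrow> G \<in> PG_planes"
  by (auto simp: Gamma_planes_def osc_PG osc_inf_PG)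
lemma Gamma_not_2C: "G \<in> Gamma_planes \<Longrightarrow> \<not> two_C_plane G"
  using card_CP_Gamma[of G] two_C_iff[of G] by simp

lemma sig_2C: "r \<noteq> t \<Longrightarrow> two_C_plane (plane_of (sig t r))"
  unfolding two_C_iff CP_sig
  by (intro conjI plane_PG card_two) (auto simp: sig_def v0_eq dest: Pt_inj)
lemma siginf_2C: "two_C_plane (plane_of (siginf t))"
  unfolding two_C_iff CP_siginf
  by (intro conjI plane_PG card_two) (auto simp: siginf_def v0_eq Pt_Pinf)
lemma rho_2C: "two_C_plane (plane_of (rho s))"
  unfolding two_C_iff CP_rho
  by (intro conjI plane_PG card_two) (auto simp: rho_def v0_eq Pt_Pinf)


lemma tangent_coeffs:
  assumes "tangent t \<subseteq> plane_of (c0,c1,c2,c3)"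
  shows "c2 = -3*t^2*c0 - 2*t*c1 \<and> c3 = 2*t^3*c0 + t^2*(c1::'a::field)"
proof -
  from assms have e1: "c0*t^3 + c1*t^2 + c2*t + c3 = 0" and e2: "c0*(3*t^2) + c1*(2*t) + c2 = 0"
    by (auto simp: tangent_sub cv_def dv_def)
  from e2 have h2: "c2 = -3*t^2*c0 - 2*t*c1" by (simp add: algebra_simps eq_neg_iff_add_eq_0)
  from e1 have "c3 = -(c0*t^3 + c1*t^2 + c2*t)" by (simp add: algebra_simps eq_neg_iff_add_eq_0)
  also have "\<dots> = -(c0*t^3 + c1*t^2 + (-3*t^2*c0 - 2*t*c1)*t)" using h2 by simp
  also have "\<dots> = 2*t^3*c0 + t^2*c1" by (simp add: algebra_simps power2_eq_square power3_eq_cube)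
  finally have "c3 = 2*t^3*c0 + t^2*c1" .
  with h2 show ?thesis by simp
qed

lemma tangent_sub_coeffs:
  "tangent t \<subseteq> plane_of (c0, c1, -3*t^2*c0 - 2*t*c1, 2*t^3*c0 + t^2*(c1::'a::field))"
  by (simp add: tangent_sub cv_def dv_def algebra_simps power2_eq_square power3_eq_cube)

lemma pencil_tangent: "pencil (tangent t) =
   insert (osc_plane t) (insert (plane_of (siginf t)) ((\<lambda>r. plane_of (sig t r)) ` (-{t})))"
proof
  show "pencil (tangent t) \<subseteq> insert (osc_plane t) (insert (plane_of (siginf t)) ((\<lambda>r. plane_of (sig t r)) ` (-{t})))"
  proof
    fix \<pi> assume "\<pi> \<in> pencil (tangent t)"
    then obtain c where pc: "\<pi> = plane_of c" "c \<noteq> v0" "tangent t \<subseteq> plane_of c"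
      by (auto simp: pencil_def PG_planes_def)
    obtain c0 c1 c2 c3 where c: "c = (c0,c1,c2,c3)" by (cases c rule: prod_cases4)
    from tangent_coeffs[of t c0 c1 c2 c3] pc c
    have h: "c2 = -3*t^2*c0 - 2*t*c1" "c3 = 2*t^3*c0 + t^2*c1" by auto
    show "\<pi> \<in> insert (osc_plane t) (insert (plane_of (siginf t)) ((\<lambda>r. plane_of (sig t r)) ` (-{t})))"
    proof (cases "c0 = 0")
      case True
      hence "c1 \<noteq> 0" using pc(2) c h by (auto simp: v0_eq)
      have "c = vsc c1 (siginf t)" using True c h by (simp add: siginf_def)
      hence "\<pi> = plane_of (siginf t)" using pc(1) plane_scale[OF \<open>c1 \<noteq> 0\<close>] by simp
      thus ?thesis by simp
    next
      case False
      show ?thesis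
      proof (cases "c1 = -3*t*c0")
        case True
        have "c = vsc c0 (osc_vec t)" using True c h
          by (simp add: osc_vec_def algebra_simps power2_eq_square power3_eq_cube)
        hence "\<pi> = osc_plane t" using pc(1) plane_scale[OF \<open>c0 \<noteq> 0\<close>] by (simp add: osc_plane_def)
        thus ?thesis by simp
      next
        case F2: False
        define r where "r = -(c1 + 2*t*c0)/c0"
        have c1r: "c1 = -(r*c0) - 2*t*c0" using \<open>c0 \<noteq> 0\<close> by (simp add: r_def field_simps)
        have "r \<noteq> t"
        proof
          assume "r = t" thus False using F2 c1r by (simp add: algebra_simps)
        qed
        have "c = vsc c0 (sig t r)" using c h c1r
          by (simp add: sig_def algebra_simps power2_eq_square power3_eq_cube)
        hence "\<pi> = plane_of (sig t r)" using pc(1) plane_scale[OF \<open>c0 \<noteq> 0\<close>] by simp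
        thus ?thesis using \<open>r \<noteq> t\<close> by simp
      qed
    qed
  qed
next
  have "tangent t \<subseteq> osc_plane t"
    by (simp add: osc_plane_def tangent_sub osc_vec_def cv_def dv_def algebra_simps power2_eq_square power3_eq_cube)
  moreover have "tangent t \<subseteq> plane_of (siginf t)"
    by (simp add: tangent_sub siginf_def cv_def dv_def algebra_simps power2_eq_square power3_eq_cube)
  moreover have "tangent t \<subseteq> plane_of (sig t r)" for r
    by (simp add: tangent_sub sig_def cv_def dv_def algebra_simps power2_eq_square power3_eq_cube)
  moreover have "plane_of (siginf t) \<in> PG_planes" by (rule plane_PG) (simp add: siginf_def v0_eq)
  moreover have "plane_of (sig t r) \<in> PG_planes" for r by (rule plane_PG) (simp add: sig_def v0_eq)
  ultimately show "insert (osc_plane t) (insert (plane_of (siginf t)) ((\<lambda>r. plane_of (sig t r)) ` (-{t}))) \<subseteq> pencil (tangent t)"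
    using osc_PG by (auto simp: pencil_def)
qed

lemma pencil_tangent_inf: "pencil tangent_inf = insert osc_inf (range (\<lambda>s. plane_of (rho s)))"
proof
  show "pencil tangent_inf \<subseteq> insert osc_inf (range (\<lambda>s. plane_of (rho s)))"
  proof
    fix \<pi> assume "\<pi> \<in> pencil tangent_inf"
    then obtain c where pc: "\<pi> = plane_of c" "c \<noteq> v0" "tangent_inf \<subseteq> plane_of c"
      by (auto simp: pencil_def PG_planes_def)
    obtain c0 c1 c2 c3 where c: "c = (c0,c1,c2,c3)" by (cases c rule: prod_cases4)
    from pc c have h: "c0 = 0" "c1 = 0" by (auto simp: tangent_inf_sub)
    show "\<pi> \<in> insert osc_inf (range (\<lambda>s. plane_of (rho s)))"
    proof (cases "c2 = 0")
      case True
      hence "c3 \<noteq> 0" using pc(2) c h by (auto simp: v0_eq)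
      have "c = vsc c3 (0,0,0,1)" using True c h by simp
      hence "\<pi> = osc_inf" using pc(1) plane_scale[OF \<open>c3 \<noteq> 0\<close>] unfolding osc_inf_def by metis
      thus ?thesis by simp
    next
      case False
      have "c = vsc c2 (rho (-c3/c2))" using False c h by (simp add: rho_def)
      hence "\<pi> = plane_of (rho (-c3/c2))" using pc(1) plane_scale[OF \<open>c2 \<noteq> 0\<close>] by simp
      thus ?thesis by simp
    qed
  qed
next
  have "tangent_inf \<subseteq> (osc_inf :: 'a v4 set)" by (simp add: osc_inf_def tangent_inf_sub)
  moreover have "tangent_inf \<subseteq> plane_of (rho s)" for s :: 'a by (simp add: rho_def tangent_inf_sub)
  moreover have "plane_of (rho s) \<in> PG_planes" for s :: 'a by (rule plane_PG) (simp add: rho_def v0_eq)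
  ultimately show "insert osc_inf (range (\<lambda>s. plane_of (rho s))) \<subseteq> (pencil tangent_inf :: 'a v4 set set)"
    using osc_inf_PG by (auto simp: pencil_def)
qed


lemma tangent_in_osc: "tangent t \<subseteq> osc_plane t"
  by (simp add: osc_plane_def tangent_sub osc_vec_def cv_def dv_def algebra_simps power2_eq_square power3_eq_cube)
lemma tangent_inf_in_osc: "tangent_inf \<subseteq> (osc_inf :: 'a::field v4 set)"
  by (simp add: osc_inf_def tangent_inf_sub)

lemma two_tangents_plane:
  assumes T1: "T1 \<in> tangents" and T2: "T2 \<in> tangents" and ne: "T1 \<noteq> T2"
    and s1: "T1 \<subseteq> plane_of c" and s2: "T2 \<subseteq> plane_of c"
  shows "c = (v0::'a::field v4)"
proof -
  obtain c0 c1 c2 c3 where c: "c = (c0,c1,c2,c3)" by (cases c rule: prod_cases4)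
  have main: "c = v0" if "tangent t \<subseteq> plane_of c" "tangent s \<subseteq> plane_of c" "s \<noteq> t" for s t
  proof -
    from tangent_coeffs[of t c0 c1 c2 c3] that c
    have h: "c2 = -3*t^2*c0 - 2*t*c1" "c3 = 2*t^3*c0 + t^2*c1" by auto
    from that(2) c have f1: "c0*s^3 + c1*s^2 + c2*s + c3 = 0" and f2: "c0*(3*s^2) + c1*(2*s) + c2 = 0"
      by (auto simp: tangent_sub cv_def dv_def)
    have "c0*s^3 + c1*s^2 + c2*s + c3 = (s-t)^2 * (c0*s + c1 + 2*t*c0)"
      unfolding h by (simp add: algebra_simps power2_eq_square power3_eq_cube)
    with f1 that(3) have g1: "c0*s + c1 + 2*t*c0 = 0" by simp
    have "c0*(3*s^2) + c1*(2*s) + c2 = (s-t) * (3*c0*(s+t) + 2*c1)"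
      unfolding h by (simp add: algebra_simps power2_eq_square power3_eq_cube)
    with f2 that(3) have g2: "3*c0*(s+t) + 2*c1 = 0" by simp
    have "c0 * (s - t) = 3*c0*(s+t) + 2*c1 - 2*(c0*s + c1 + 2*t*c0)" by (simp add: algebra_simps)
    with g1 g2 have "c0 * (s-t) = 0" by simp
    with that(3) have "c0 = 0" by simp
    with g1 have "c1 = 0" by simp
    with \<open>c0 = 0\<close> h c show ?thesis by (simp add: v0_eq)
  qed
  have inf: "c = v0" if "tangent t \<subseteq> plane_of c" "tangent_inf \<subseteq> plane_of c" for t
  proof -
    from that c have "c0 = 0" "c1 = 0" by (auto simp: tangent_inf_sub)
    with tangent_coeffs[of t c0 c1 c2 c3] that c show ?thesis by (simp add: v0_eq)
  qed
  from T1 T2 ne s1 s2 show ?thesis unfolding tangents_def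
    by (auto intro: main inf)
qed

lemma tangent_inj: "tangent s = tangent t \<Longrightarrow> s = (t::'a::field)"
proof -
  assume "tangent s = tangent t"
  hence "cv s \<in> osc_plane t" using line_u[of "cv s" "dv s"] tangent_in_osc[of t]
    by (auto simp: tangent_def dv_def)
  hence "(s - t)^3 = 0" by (simp add: osc_plane_def mem_plane ev_osc)
  thus ?thesis by simp
qed
lemma tangent_ne_inf: "tangent t \<noteq> (tangent_inf :: 'a::field v4 set)"
proof
  assume "tangent t = tangent_inf"
  hence "(1,0,0,0) \<in> osc_plane t" using line_u[of "(1::'a,0::'a,0::'a,0::'a)" "(0,1,0,0)"] tangent_in_osc[of t]
    by (auto simp: tangent_inf_def)
  thus False by (simp add: osc_plane_def mem_plane osc_vec_def)
qed

lemma card_tangents: "card (tangents :: 'a::{field,finite} v4 set set) = CARD('a) + 1"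
proof -
  have "card (range (tangent :: 'a \<Rightarrow> _)) = CARD('a)"
    by (rule card_image) (auto intro: inj_onI tangent_inj)
  moreover have "tangent_inf \<notin> range (tangent :: 'a \<Rightarrow> _)" using tangent_ne_inf by (metis imageE)
  ultimately show ?thesis unfolding tangents_def by simp
qed

lemma pencil_sub: "T \<in> tangents \<Longrightarrow> pencil T \<subseteq> Gamma_planes \<union> {\<pi>. two_C_plane \<pi>}"
proof
  fix \<pi> assume T: "T \<in> tangents" and p: "\<pi> \<in> pencil T"
  show "\<pi> \<in> Gamma_planes \<union> {\<pi>. two_C_plane \<pi>}"
  proof (cases "T = tangent_inf")
    case True
    from p[unfolded True pencil_tangent_inf] show ?thesis
    proof (elim insertE imageE)
      assume "\<pi> = osc_inf" thus ?thesis by (simp add: Gamma_planes_def)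
    next
      fix s assume "\<pi> = plane_of (rho s)" thus ?thesis using rho_2C[of s] by blast
    qed
  next
    case False
    with T obtain t where t: "T = tangent t" by (auto simp: tangents_def)
    from p[unfolded t pencil_tangent] show ?thesis
    proof (elim insertE imageE)
      assume "\<pi> = osc_plane t" thus ?thesis by (simp add: Gamma_planes_def)
    next
      assume "\<pi> = plane_of (siginf t)" thus ?thesis using siginf_2C[of t] by blast
    next
      fix r assume "\<pi> = plane_of (sig t r)" "r \<in> -{t}" thus ?thesis using sig_2C[of r t] by blast
    qed
  qed
qed

lemma pencil_tangent_Gamma: "pencil (tangent t) \<inter> Gamma_planes = {osc_plane t}"
proof -
  have "\<forall>\<pi>\<in>insert (plane_of (siginf t)) ((\<lambda>r. plane_of (sig t r)) ` (-{t})). \<pi> \<notin> Gamma_planes"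
    using sig_2C siginf_2C Gamma_not_2C by blast
  moreover have "osc_plane t \<in> Gamma_planes" by (simp add: Gamma_planes_def)
  ultimately show ?thesis unfolding pencil_tangent by blast
qed

lemma pencil_tangent_inf_Gamma: "pencil tangent_inf \<inter> Gamma_planes = {osc_inf}"
proof -
  have "\<forall>\<pi>\<in>range (\<lambda>s. plane_of (rho s)). \<pi> \<notin> Gamma_planes"
    using rho_2C Gamma_not_2C by blast
  moreover have "osc_inf \<in> Gamma_planes" by (simp add: Gamma_planes_def)
  ultimately show ?thesis unfolding pencil_tangent_inf by blast
qed

lemma pencil_tangent_2C: "pencil (tangent t) \<inter> {\<pi>. two_C_plane \<pi>} =
   insert (plane_of (siginf t)) ((\<lambda>r. plane_of (sig t r)) ` (-{t}))"
proof -
  have "\<not> two_C_plane (osc_plane t)" using Gamma_not_2C[of "osc_plane t"] by (simp add: Gamma_planes_def)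
  moreover have "\<forall>\<pi>\<in>insert (plane_of (siginf t)) ((\<lambda>r. plane_of (sig t r)) ` (-{t})). two_C_plane \<pi>"
    by (auto simp: sig_2C siginf_2C)
  ultimately show ?thesis unfolding pencil_tangent by blast
qed

lemma pencil_tangent_inf_2C: "pencil tangent_inf \<inter> {\<pi>. two_C_plane \<pi>} = range (\<lambda>s. plane_of (rho s))"
  using Gamma_not_2C[of "osc_inf"] rho_2C
  by (auto simp: pencil_tangent_inf Gamma_planes_def)

lemma card_pencil_tangent_2C:
  "card (pencil (tangent (t::'a)) \<inter> {\<pi>. two_C_plane \<pi>}) = CARD('a::{field,finite})"
proof -
  have inj: "inj_on (\<lambda>r. plane_of (sig t r)) (-{t})"
  proof (rule inj_onI)
    fix r r' assume "r \<in> -{t}" "r' \<in> -{t}" "plane_of (sig t r) = plane_of (sig t r')"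
    hence "CP (plane_of (sig t r)) = CP (plane_of (sig t r'))" by simp
    hence "Pt r \<in> {Pt t, Pt r'}" using CP_sig[of t r] CP_sig[of t r'] by (metis insertCI)
    thus "r = r'" using \<open>r \<in> -{t}\<close> by (auto dest: Pt_inj)
  qed
  have nin: "plane_of (siginf t) \<notin> (\<lambda>r. plane_of (sig t r)) ` (-{t})"
  proof
    assume "plane_of (siginf t) \<in> (\<lambda>r. plane_of (sig t r)) ` (-{t})"
    then obtain r where "plane_of (siginf t) = plane_of (sig t r)" by auto
    hence "CP (plane_of (siginf t)) = CP (plane_of (sig t r))" by simp
    hence "Pinf \<in> {Pt t, Pt r}" using CP_sig[of t r] CP_siginf[of t] by (metis insertCI)
    thus False using Pt_Pinf by (metis empty_iff insert_iff)
  qed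
  have "card (-{t}) = CARD('a) - 1" using card_Diff_singleton[of t UNIV] by (simp add: Compl_eq_Diff_UNIV)
  moreover have "CARD('a) \<ge> 1" by (simp add: Suc_leI)
  ultimately show ?thesis unfolding pencil_tangent_2C using inj nin
    by (simp add: card_image)
qed

lemma card_pencil_tangent_inf_2C:
  "card (pencil (tangent_inf :: 'a v4 set) \<inter> {\<pi>. two_C_plane \<pi>}) = CARD('a::{field,finite})"
proof -
  have inj: "inj (\<lambda>s::'a. plane_of (rho s))"
  proof (rule injI)
    fix r r' :: 'a assume "plane_of (rho r) = plane_of (rho r')"
    hence "CP (plane_of (rho r)) = CP (plane_of (rho r'))" by simp
    hence "Pt r \<in> {Pt r', Pinf}" using CP_rho[of r] CP_rho[of r'] by (metis insertCI)
    thus "r = r'" using Pt_Pinf by (auto dest: Pt_inj)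
  qed
  show ?thesis unfolding pencil_tangent_inf_2C by (simp add: card_image[OF inj])
qed


lemma card_Pt_image: "card (Pt ` Z) = card (Z :: 'a::field set)"
  by (rule card_image) (auto intro: inj_onI Pt_inj)

lemma add0_right: "y + x = 0 \<Longrightarrow> x = -(y::'a::ab_group_add)"
  by (simp add: eq_neg_iff_add_eq_0 add.commute)

lemma twoC_has_tangent:
  assumes "two_C_plane (\<pi> :: 'a::{field,finite} v4 set)"
  shows "\<exists>T\<in>tangents. T \<subseteq> \<pi>"
proof -
  from assms obtain c where pc: "\<pi> = plane_of c" "c \<noteq> v0" and cd: "card (CP \<pi>) = 2"
    by (auto simp: two_C_iff PG_planes_def)
  obtain c0 c1 c2 c3 where c: "c = (c0,c1,c2,c3)" by (cases c rule: prod_cases4)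
  define Z where "Z = {x. vdot (c0,c1,c2,c3) (cv x) = 0}"
  have Zf: "x \<in> Z \<longleftrightarrow> c0*x^3 + c1*x^2 + c2*x + c3 = 0" for x by (simp add: Z_def cv_def)
  have CPe: "CP \<pi> = Pt ` Z \<union> (if c0 = 0 then {Pinf} else {})"
    unfolding pc c Z_def by (rule CP_plane)
  have tan: "tangent a \<subseteq> \<pi>" if "c0*a^3 + c1*a^2 + c2*a + c3 = 0" "c0*(3*a^2) + c1*(2*a) + c2 = 0" for a
    using that pc c by (simp add: tangent_sub cv_def dv_def)
  show ?thesis
  proof (cases "c0 = 0")
    case False
    hence "card (Pt ` Z) = 2" using cd CPe by simp
    hence "card Z = 2" by (simp add: card_Pt_image)
    then obtain a b where ab: "Z = {a,b}" "a \<noteq> b" by (auto simp: card_2_iff)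
    have fa: "c0*a^3 + c1*a^2 + c2*a + c3 = 0" and fb: "c0*b^3 + c1*b^2 + c2*b + c3 = 0"
      using ab Zf by auto
    have "(a - b) * (c0*(a^2+a*b+b^2) + c1*(a+b) + c2) = (c0*a^3 + c1*a^2 + c2*a + c3) - (c0*b^3 + c1*b^2 + c2*b + c3)"
      by (simp add: algebra_simps power2_eq_square power3_eq_cube)
    with fa fb ab(2) have "c0*(a^2+a*b+b^2) + c1*(a+b) + c2 = 0" by simp
    hence h2: "c2 = -(c0*(a^2+a*b+b^2) + c1*(a+b))" by (rule add0_right)
    from fa have h3: "c3 = -(c0*a^3 + c1*a^2 + c2*a)" by (rule add0_right)
    have fact: "c0*x^3 + c1*x^2 + c2*x + c3 = (x-a)*(x-b)*(c0*x + c1 + c0*(a+b))" for x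
      unfolding h3 h2 by (simp add: algebra_simps power2_eq_square power3_eq_cube)
    define r where "r = -(c1 + c0*(a+b))/c0"
    have "c0*r + c1 + c0*(a+b) = 0" using False by (simp add: r_def field_simps)
    hence "r \<in> Z" using fact[of r] Zf by simp
    hence "r = a \<or> r = b" using ab by simp
    moreover have c1r: "c1 = -(c0*r) - c0*(a+b)" using False by (simp add: r_def field_simps)
    ultimately have "c1 = -(c0*(2*a+b)) \<or> c1 = -(c0*(a+2*b))"
    proof (elim disjE)
      assume "r = a"
      hence "c1 = -(c0*a) - c0*(a+b)" using c1r by simp
      also have "\<dots> = -(c0*(2*a+b))" by (simp add: algebra_simps)
      finally show ?thesis by simp
    next
      assume "r = b"
      hence "c1 = -(c0*b) - c0*(a+b)" using c1r by simp
      also have "\<dots> = -(c0*(a+2*b))" by (simp add: algebra_simps)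
      finally show ?thesis by simp
    qed
    thus ?thesis
    proof
      assume c1: "c1 = -(c0*(2*a+b))"
      have "c0*(3*a^2) + c1*(2*a) + c2 = 0" unfolding h2 c1 by (simp add: algebra_simps power2_eq_square)
      hence "tangent a \<subseteq> \<pi>" using tan fa by simp
      thus ?thesis by (auto simp: tangents_def)
    next
      assume c1: "c1 = -(c0*(a+2*b))"
      have "c0*(3*b^2) + c1*(2*b) + c2 = 0" unfolding h2 c1 by (simp add: algebra_simps power2_eq_square)
      hence "tangent b \<subseteq> \<pi>" using tan fb by simp
      thus ?thesis by (auto simp: tangents_def)
    qed
  next
    case True
    have "Pinf \<notin> Pt ` Z" using Pt_Pinf by (metis imageE)
    moreover have "finite (Pt ` Z)" by simp
    ultimately have "card (Pt ` Z) = 1" using cd CPe True by simp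
    hence "card Z = 1" by (simp add: card_Pt_image)
    then obtain a where a: "Z = {a}" by (auto simp: card_1_singleton_iff)
    have fa: "c1*a^2 + c2*a + c3 = 0" using a Zf True by auto
    show ?thesis
    proof (cases "c1 = 0")
      case True
      hence "tangent_inf \<subseteq> \<pi>" using \<open>c0 = 0\<close> pc c by (simp add: tangent_inf_sub)
      thus ?thesis by (auto simp: tangents_def)
    next
      case False
      from fa have h3: "c3 = -(c1*a^2 + c2*a)" by (rule add0_right)
      define r where "r = -(c1*a + c2)/c1"
      have "c1*r + c1*a + c2 = 0" using False by (simp add: r_def field_simps)
      moreover have "c1*x^2 + c2*x + c3 = (x-a)*(c1*x + c1*a + c2)" for x
        unfolding h3 by (simp add: algebra_simps power2_eq_square)
      ultimately have "r \<in> Z" using Zf \<open>c0 = 0\<close> by simp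
      hence "r = a" using a by simp
      hence "- c2 = a*(c1*2)" using False by (simp add: r_def field_simps)
      hence "c2 = -2*c1*a" by (metis minus_minus mult.commute mult.left_commute mult_minus_left)
      hence "c0*(3*a^2) + c1*(2*a) + c2 = 0" using \<open>c0 = 0\<close> by simp
      hence "tangent a \<subseteq> \<pi>" using tan fa \<open>c0 = 0\<close> by simp
      thus ?thesis by (auto simp: tangents_def)
    qed
  qed
qed

lemma pencil_inj: "inj_on pencil (tangents :: 'a::field v4 set set)"
proof (rule inj_onI)
  fix T1 T2 :: "'a v4 set" assume T: "T1 \<in> tangents" "T2 \<in> tangents" and eq: "pencil T1 = pencil T2"
  show "T1 = T2"
  proof (rule ccontr)
    assume ne: "T1 \<noteq> T2"
    have "\<exists>G. G \<in> pencil T1" using T(1)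
      by (auto simp: tangents_def pencil_tangent pencil_tangent_inf)
    then obtain G where G: "G \<in> pencil T1" "G \<in> pencil T2" using eq by auto
    then obtain c where "G = plane_of c" "c \<noteq> v0" by (auto simp: pencil_def PG_planes_def)
    with G two_tangents_plane[OF T ne] show False by (auto simp: pencil_def)
  qed
qed

lemma pencil_disj: "T1 \<in> tangents \<Longrightarrow> T2 \<in> tangents \<Longrightarrow> T1 \<noteq> T2 \<Longrightarrow> pencil T1 \<inter> pencil T2 = ({} :: 'a::field v4 set set)"
proof -
  assume T: "T1 \<in> tangents" "T2 \<in> tangents" and ne: "T1 \<noteq> T2"
  show ?thesis
  proof (rule ccontr)
    assume "pencil T1 \<inter> pencil T2 \<noteq> {}"
    then obtain G where G: "G \<in> pencil T1" "G \<in> pencil T2" by auto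
    then obtain c where "G = plane_of c" "c \<noteq> v0" by (auto simp: pencil_def PG_planes_def)
    with G two_tangents_plane[OF T ne] show False by (auto simp: pencil_def)
  qed
qed

lemma part1:
  "\<exists>PP :: 'a::{field,finite} v4 set set set.
        card PP = CARD('a) + 1
      \<and> (\<forall>\<Pi>\<in>PP. \<forall>\<Pi>'\<in>PP. \<Pi> \<noteq> \<Pi>' \<longrightarrow> \<Pi> \<inter> \<Pi>' = {})
      \<and> \<Union>PP = Gamma_planes \<union> {\<pi>. two_C_plane \<pi>}
      \<and> (\<forall>\<Pi>\<in>PP. \<exists>T\<in>tangents. \<Pi> = pencil T
            \<and> card (\<Pi> \<inter> Gamma_planes) = 1
            \<and> card (\<Pi> \<inter> {\<pi>. two_C_plane \<pi>}) = CARD('a))"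
proof (intro exI[of _ "pencil ` tangents"] conjI)
  show "card (pencil ` (tangents :: 'a v4 set set)) = CARD('a) + 1"
    using card_image[OF pencil_inj[where 'a='a]] card_tangents[where 'a='a] by simp
  show "\<forall>\<Pi>\<in>pencil ` tangents. \<forall>\<Pi>'\<in>pencil ` tangents. \<Pi> \<noteq> \<Pi>' \<longrightarrow> \<Pi> \<inter> \<Pi>' = ({} :: 'a v4 set set)"
    using pencil_disj by blast
  show "\<Union> (pencil ` tangents) = Gamma_planes \<union> {\<pi>. two_C_plane (\<pi> :: 'a v4 set)}"
  proof
    show "\<Union> (pencil ` tangents) \<subseteq> Gamma_planes \<union> {\<pi>. two_C_plane (\<pi> :: 'a v4 set)}"
      using pencil_sub by blast
  next
    show "Gamma_planes \<union> {\<pi>. two_C_plane (\<pi> :: 'a v4 set)} \<subseteq> \<Union> (pencil ` tangents)"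
    proof
      fix \<pi> :: "'a v4 set" assume "\<pi> \<in> Gamma_planes \<union> {\<pi>. two_C_plane \<pi>}"
      thus "\<pi> \<in> \<Union> (pencil ` tangents)"
      proof
        assume "\<pi> \<in> Gamma_planes"
        then consider t where "\<pi> = osc_plane t" | "\<pi> = osc_inf" by (auto simp: Gamma_planes_def)
        thus ?thesis
        proof cases
          case (1 t)
          hence "\<pi> \<in> pencil (tangent t)" by (simp add: pencil_tangent)
          thus ?thesis by (auto simp: tangents_def)
        next
          case 2
          hence "\<pi> \<in> pencil tangent_inf" by (simp add: pencil_tangent_inf)
          thus ?thesis by (auto simp: tangents_def)
        qed
      next
        assume "\<pi> \<in> {\<pi>. two_C_plane \<pi>}"
        hence 2: "two_C_plane \<pi>" by simp
        then obtain T where "T \<in> tangents" "T \<subseteq> \<pi>" using twoC_has_tangent by blast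
        moreover have "\<pi> \<in> PG_planes" using 2 by (simp add: two_C_plane_def)
        ultimately show ?thesis by (auto simp: pencil_def)
      qed
    qed
  qed
  show "\<forall>\<Pi>\<in>pencil ` (tangents :: 'a v4 set set). \<exists>T\<in>tangents. \<Pi> = pencil T
            \<and> card (\<Pi> \<inter> Gamma_planes) = 1
            \<and> card (\<Pi> \<inter> {\<pi>. two_C_plane \<pi>}) = CARD('a)"
  proof
    fix \<Pi> assume "\<Pi> \<in> pencil ` (tangents :: 'a v4 set set)"
    then obtain T where T: "T \<in> tangents" "\<Pi> = pencil T" by auto
    have "card (\<Pi> \<inter> Gamma_planes) = 1 \<and> card (\<Pi> \<inter> {\<pi>. two_C_plane \<pi>}) = CARD('a)"
      using T unfolding tangents_def
      by (auto simp: pencil_tangent_Gamma pencil_tangent_inf_Gamma card_pencil_tangent_2C card_pencil_tangent_inf_2C)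
    thus "\<exists>T\<in>tangents. \<Pi> = pencil T
            \<and> card (\<Pi> \<inter> Gamma_planes) = 1
            \<and> card (\<Pi> \<inter> {\<pi>. two_C_plane \<pi>}) = CARD('a)" using T by blast
  qed
qed


lemma zero_comb: "vadd (vsc 0 u) (vsc 0 v) = (v0::'a::field v4)"
  by (cases u rule: prod_cases4, cases v rule: prod_cases4) (simp add: v0_eq)

lemma solve2:
  assumes "c0*A + c1*B = 0" "d0*A + d1*B = 0" "c0*d1 \<noteq> c1*(d0::'a::field)"
  shows "A = 0 \<and> B = 0"
proof -
  have "(c0*d1 - c1*d0) * A = d1*(c0*A + c1*B) - c1*(d0*A + d1*B)" by (simp add: algebra_simps)
  hence "(c0*d1 - c1*d0) * A = 0" using assms by simp
  hence A: "A = 0" using assms(3) by simp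
  have "(c0*d1 - c1*d0) * B = c0*(d0*A + d1*B) - d0*(c0*A + c1*B)" by (simp add: algebra_simps)
  hence "(c0*d1 - c1*d0) * B = 0" using assms by simp
  hence "B = 0" using assms(3) by simp
  with A show ?thesis by simp
qed

lemma prop2:
  assumes "(c0,c1) \<noteq> (0,0)" "(d0,d1) \<noteq> (0,0)" "c0*d1 = c1*(d0::'a::field)"
  shows "\<exists>k. k \<noteq> 0 \<and> d0 = k*c0 \<and> d1 = k*c1"
proof (cases "c0 = 0")
  case True
  hence "c1 \<noteq> 0" using assms by simp
  hence "d0 = 0" using assms(3) True by simp
  hence "d1 \<noteq> 0" using assms by simp
  show ?thesis
    by (rule exI[of _ "d1/c1"]) (use True \<open>c1 \<noteq> 0\<close> \<open>d0 = 0\<close> \<open>d1 \<noteq> 0\<close> in simp)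
next
  case False
  have d1: "d1 = c1*d0/c0" using False assms(3) by (simp add: field_simps)
  have "d0 \<noteq> 0" using assms d1 by auto
  show ?thesis
    by (rule exI[of _ "d0/c0"]) (use False \<open>d0 \<noteq> 0\<close> d1 in simp)
qed

lemma pencil_vec_perp:
  assumes "indep2 n1 (n2::'a::field v4)"
  shows "\<exists>c. c \<noteq> v0 \<and> (\<exists>a b. c = vadd (vsc a n1) (vsc b n2)) \<and> vdot c w = 0"
proof (cases "vdot n1 w = 0 \<and> vdot n2 w = 0")
  case True
  have "n1 = vadd (vsc 1 n1) (vsc 0 n2)" by (cases n1 rule: prod_cases4, cases n2 rule: prod_cases4) simp
  moreover have "n1 \<noteq> v0"
  proof
    assume "n1 = v0"
    hence "vadd (vsc 1 n1) (vsc 0 n2) = v0" by (cases n2 rule: prod_cases4) (simp add: v0_eq)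
    hence "(1::'a) = 0" using assms unfolding indep2_def by blast
    thus False by simp
  qed
  ultimately show ?thesis using True by blast
next
  case False
  define c where "c = vadd (vsc (vdot n2 w) n1) (vsc (- vdot n1 w) n2)"
  have "c \<noteq> v0"
  proof
    assume "c = v0"
    hence "vdot n2 w = 0 \<and> - vdot n1 w = 0" using assms unfolding c_def indep2_def by blast
    thus False using False by simp
  qed
  moreover have "vdot c w = 0" by (simp add: c_def algebra_simps)
  ultimately show ?thesis unfolding c_def by blast
qed

lemma plane_through:
  assumes ind: "indep2 n1 (n2::'a::field v4)" and z: "z \<in> line_of u v" "z \<noteq> v0"
    and zn: "vdot n1 z = 0" "vdot n2 z = 0"
  shows "\<exists>c. c \<noteq> v0 \<and> (\<exists>a b. c = vadd (vsc a n1) (vsc b n2)) \<and> vdot c u = 0 \<and> vdot c v = 0"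
proof -
  obtain \<alpha> \<beta> where zab: "z = vadd (vsc \<alpha> u) (vsc \<beta> v)" using z(1) by (auto simp: mem_line)
  have cz: "vdot c z = 0" if "\<exists>a b. c = vadd (vsc a n1) (vsc b n2)" for c
    using that zn by auto
  have zc: "vdot c z = \<alpha> * vdot c u + \<beta> * vdot c v" for c by (simp add: zab)
  show ?thesis
  proof (cases "\<beta> = 0")
    case False
    obtain c where c: "c \<noteq> v0" "\<exists>a b. c = vadd (vsc a n1) (vsc b n2)" "vdot c u = 0"
      using pencil_vec_perp[OF ind] by blast
    have "\<beta> * vdot c v = 0" using cz[OF c(2)] zc[of c] c(3) by simp
    hence "vdot c v = 0" using False by simp
    thus ?thesis using c by blast
  next
    case True
    hence "\<alpha> \<noteq> 0" using z(2) zab zero_comb by metis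
    obtain c where c: "c \<noteq> v0" "\<exists>a b. c = vadd (vsc a n1) (vsc b n2)" "vdot c v = 0"
      using pencil_vec_perp[OF ind] by blast
    have "\<alpha> * vdot c u = 0" using cz[OF c(2)] zc[of c] c(3) by simp
    hence "vdot c u = 0" using \<open>\<alpha> \<noteq> 0\<close> by simp
    thus ?thesis using c by blast
  qed
qed

lemma tangent_normals:
  assumes "T \<in> tangents"
  shows "\<exists>n1 n2. indep2 n1 n2 \<and> (\<forall>a b. T \<subseteq> plane_of (vadd (vsc a n1) (vsc b (n2::'a::field v4))))"
proof -
  have lin: "T \<subseteq> plane_of (vadd (vsc a n1) (vsc b n2))" if "T \<subseteq> plane_of n1" "T \<subseteq> plane_of n2" for a b n1 n2
  proof
    fix x assume "x \<in> T"
    with that have "vdot n1 x = 0" "vdot n2 x = 0" by (auto simp: mem_plane)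
    thus "x \<in> plane_of (vadd (vsc a n1) (vsc b n2))" by (simp add: mem_plane)
  qed
  show ?thesis
  proof (cases "T = tangent_inf")
    case True
    have "indep2 (0,0,1,0) (0,0,0,1::'a)" by (simp add: indep2_def v0_eq)
    moreover have "T \<subseteq> plane_of (0,0,1,0)" "T \<subseteq> plane_of (0,0,0,1::'a)"
      using True by (simp_all add: tangent_inf_sub)
    ultimately show ?thesis using lin by blast
  next
    case False
    then obtain t where t: "T = tangent t" using assms by (auto simp: tangents_def)
    have "indep2 (siginf t) (osc_vec t)" by (simp add: indep2_def v0_eq siginf_def osc_vec_def)
    moreover have "T \<subseteq> plane_of (siginf t)" using t
      by (simp add: tangent_sub siginf_def cv_def dv_def algebra_simps power2_eq_square power3_eq_cube)
    moreover have "T \<subseteq> plane_of (osc_vec t)" using t tangent_in_osc[of t] by (simp add: osc_plane_def)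
    ultimately show ?thesis using lin by blast
  qed
qed

lemma tangent_osc:
  assumes "T \<in> tangents"
  shows "\<exists>w. plane_of w \<in> Gamma_planes \<and> T \<subseteq> plane_of (w::'a::field v4)"
  using assms tangent_in_osc tangent_inf_in_osc
  unfolding tangents_def Gamma_planes_def osc_plane_def osc_inf_def by blast

lemma tangent_line: "T \<in> tangents \<Longrightarrow> \<exists>a b. T = line_of a (b::'a::field v4)"
  unfolding tangents_def tangent_def tangent_inf_def by blast

lemma meet:
  assumes T: "T \<in> tangents" and p1: "\<pi>1 \<in> pencil T" and p2: "\<pi>2 \<in> pencil T" and ne: "\<pi>1 \<noteq> \<pi>2"
    and z: "z \<in> \<pi>1" "z \<in> \<pi>2"
  shows "z \<in> (T::'a::field v4 set)"
proof -
  obtain c where c: "\<pi>1 = plane_of c" "c \<noteq> v0" "T \<subseteq> plane_of c" using p1 by (auto simp: pencil_def PG_planes_def)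
  obtain d where d: "\<pi>2 = plane_of d" "d \<noteq> v0" "T \<subseteq> plane_of d" using p2 by (auto simp: pencil_def PG_planes_def)
  obtain c0 c1 c2 c3 where cc: "c = (c0,c1,c2,c3)" by (cases c rule: prod_cases4)
  obtain d0 d1 d2 d3 where dd: "d = (d0,d1,d2,d3)" by (cases d rule: prod_cases4)
  obtain z0 z1 z2 z3 where zz: "z = (z0,z1,z2,z3)" by (cases z rule: prod_cases4)
  show ?thesis
  proof (cases "T = tangent_inf")
    case True
    have h: "c0 = 0" "c1 = 0" "d0 = 0" "d1 = 0" using c d cc dd True by (auto simp: tangent_inf_sub)
    have "c2*d3 \<noteq> c3*d2"
    proof
      assume e: "c2*d3 = c3*d2"
      have nc: "(c2,c3) \<noteq> (0,0)" using h cc c(2) by (auto simp: v0_eq)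
      have nd: "(d2,d3) \<noteq> (0,0)" using h dd d(2) by (auto simp: v0_eq)
      obtain k where k: "k \<noteq> 0" "d2 = k*c2" "d3 = k*c3" using prop2[OF nc nd e] by blast
      have "d = vsc k c" using k h cc dd by simp
      hence "\<pi>2 = \<pi>1" using c(1) d(1) plane_scale[OF k(1)] by simp
      thus False using ne by simp
    qed
    moreover have "c2*z2 + c3*z3 = 0" "d2*z2 + d3*z3 = 0" using z c(1) d(1) cc dd zz h by (auto simp: mem_plane)
    ultimately have "z2 = 0 \<and> z3 = 0" using solve2 by blast
    hence "z = vadd (vsc z0 (1,0,0,0)) (vsc z1 (0,1,0,0))" using zz by simp
    thus ?thesis using True by (auto simp: tangent_inf_def mem_line)
  next
    case False
    then obtain t where t: "T = tangent t" using T by (auto simp: tangents_def)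
    from tangent_coeffs[of t c0 c1 c2 c3] c(3) cc t
    have hc: "c2 = -3*t^2*c0 - 2*t*c1" "c3 = 2*t^3*c0 + t^2*c1" by auto
    from tangent_coeffs[of t d0 d1 d2 d3] d(3) dd t
    have hd: "d2 = -3*t^2*d0 - 2*t*d1" "d3 = 2*t^3*d0 + t^2*d1" by auto
    have "c0*d1 \<noteq> c1*d0"
    proof
      assume e: "c0*d1 = c1*d0"
      have nc: "(c0,c1) \<noteq> (0,0)"
      proof
        assume "(c0,c1) = (0,0)" hence "c = v0" using hc cc by (simp add: v0_eq)
        thus False using c(2) by simp
      qed
      have nd: "(d0,d1) \<noteq> (0,0)"
      proof
        assume "(d0,d1) = (0,0)" hence "d = v0" using hd dd by (simp add: v0_eq)
        thus False using d(2) by simp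
      qed
      obtain k where k: "k \<noteq> 0" "d0 = k*c0" "d1 = k*c1" using prop2[OF nc nd e] by blast
      have "d = vsc k c" unfolding cc dd hc hd k(2) k(3) by (simp add: algebra_simps)
      hence "\<pi>2 = \<pi>1" using c(1) d(1) plane_scale[OF k(1)] by simp
      thus False using ne by simp
    qed
    moreover have "vdot c z = c0*(z0 - 3*t^2*z2 + 2*t^3*z3) + c1*(z1 - 2*t*z2 + t^2*z3)"
      unfolding cc zz hc by (simp add: algebra_simps)
    moreover have "vdot d z = d0*(z0 - 3*t^2*z2 + 2*t^3*z3) + d1*(z1 - 2*t*z2 + t^2*z3)"
      unfolding dd zz hd by (simp add: algebra_simps)
    moreover have "vdot c z = 0" "vdot d z = 0" using z c(1) d(1) by (auto simp: mem_plane)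
    ultimately have E: "c0*(z0 - 3*t^2*z2 + 2*t^3*z3) + c1*(z1 - 2*t*z2 + t^2*z3) = 0"
       "d0*(z0 - 3*t^2*z2 + 2*t^3*z3) + d1*(z1 - 2*t*z2 + t^2*z3) = 0" by metis+
    have AB: "z0 - 3*t^2*z2 + 2*t^3*z3 = 0 \<and> z1 - 2*t*z2 + t^2*z3 = 0"
      by (rule solve2[OF E \<open>c0*d1 \<noteq> c1*d0\<close>])
    have "z = vadd (vsc z3 (cv t)) (vsc (z2 - t*z3) (3*t^2, 2*t, 1, 0))"
    proof -
      have e0: "z0 = 3*t^2*z2 - 2*t^3*z3" using AB by (simp add: algebra_simps eq_diff_eq)
      have e1: "z1 = 2*t*z2 - t^2*z3" using AB by (simp add: algebra_simps eq_diff_eq)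
      show ?thesis unfolding zz e0 e1
        by (simp add: cv_def algebra_simps power2_eq_square power3_eq_cube)
    qed
    thus ?thesis using t by (auto simp: tangent_def mem_line)
  qed
qed


definition goodl :: "'a::field v4 set \<Rightarrow> 'a v4 \<Rightarrow> 'a v4 \<Rightarrow> bool" where
  "goodl l u v \<longleftrightarrow> l = line_of u v \<and> indep2 u v \<and> (\<forall>G\<in>Gamma_planes. \<not> l \<subseteq> G)
     \<and> (\<forall>P\<in>twisted_cubic. \<not> P \<subseteq> l)"

lemma ev_osc_d: "vdot (osc_vec t) (dv s) = 3*(s-t)^2"
  by (simp add: osc_vec_def dv_def algebra_simps power2_eq_square)
lemma ev_siginf_d: "vdot (siginf t) (dv s) = 2*(s-t)"
  by (simp add: siginf_def dv_def algebra_simps)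
lemma tangent_sub_siginf: "tangent t \<subseteq> plane_of (siginf t)"
  by (simp add: tangent_sub ev_siginf ev_siginf_d)

lemma tangents_disj:
  assumes T1: "T1 \<in> tangents" and T2: "T2 \<in> tangents" and ne: "T1 \<noteq> T2"
    and z: "z \<in> T1" "z \<in> T2"
  shows "z = (v0::'a::field v4)"
proof -
  have main: "z = v0" if zs: "z \<in> tangent s" and zt: "z \<in> tangent t" and st: "s \<noteq> t" for s t
  proof -
    obtain a b where zab: "z = vadd (vsc a (cv s)) (vsc b (dv s))" using zs unfolding tangent_def mem_line dv_def by blast
    have "z \<in> osc_plane t" using zt tangent_in_osc by blast
    hence e1: "a*(s-t)^3 + b*(3*(s-t)^2) = 0"
      by (simp only: zab osc_plane_def mem_plane vdot_vadd_r vdot_vsc_r ev_osc ev_osc_d)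
    have "z \<in> plane_of (siginf t)" using zt tangent_sub_siginf by blast
    hence e2: "a*(s-t)^2 + b*(2*(s-t)) = 0"
      by (simp only: zab mem_plane vdot_vadd_r vdot_vsc_r ev_siginf ev_siginf_d)
    have d: "s - t \<noteq> 0" using st by simp
    have "(s-t)^2 * (a*(s-t) + 3*b) = 0" using e1 by (simp add: algebra_simps power2_eq_square power3_eq_cube)
    hence f1: "a*(s-t) + 3*b = 0" using d by simp
    have "(s-t) * (a*(s-t) + 2*b) = 0" using e2 by (simp add: algebra_simps power2_eq_square)
    hence f2: "a*(s-t) + 2*b = 0" using d by simp
    have "b = (a*(s-t) + 3*b) - (a*(s-t) + 2*b)" by (simp add: algebra_simps)
    hence "b = 0" using f1 f2 by simp
    hence "a = 0" using f2 d by simp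
    with \<open>b = 0\<close> show ?thesis using zab zero_comb by metis
  qed
  have inf: "z = v0" if zt: "z \<in> tangent t" and zi: "z \<in> tangent_inf" for t
  proof -
    obtain a b where zab: "z = vadd (vsc a (1,0,0,0)) (vsc b (0,1,0,0))" using zi unfolding tangent_inf_def mem_line by blast
    have "z \<in> osc_plane t" using zt tangent_in_osc by blast
    hence e1: "a - 3*t*b = 0" by (simp add: zab osc_plane_def mem_plane osc_vec_def algebra_simps)
    have "z \<in> plane_of (siginf t)" using zt tangent_sub_siginf by blast
    hence "b = 0" by (simp add: zab mem_plane siginf_def)
    with e1 have "a = 0" by simp
    with \<open>b = 0\<close> show ?thesis using zab zero_comb by metis
  qed
  show ?thesis
  proof (cases "T1 = tangent_inf")
    case True
    with T2 ne obtain t where "T2 = tangent t" by (auto simp: tangents_def)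
    thus ?thesis using inf z True by blast
  next
    case False
    with T1 obtain s where s: "T1 = tangent s" by (auto simp: tangents_def)
    show ?thesis
    proof (cases "T2 = tangent_inf")
      case True
      thus ?thesis using inf z s by blast
    next
      case False
      with T2 obtain t where t: "T2 = tangent t" by (auto simp: tangents_def)
      with s ne have "s \<noteq> t" by blast
      thus ?thesis using main z s t by blast
    qed
  qed
qed

lemma comb_scale: "vadd (vsc (k*a) u) (vsc (k*b) v) = vsc k (vadd (vsc a u) (vsc b (v::'a::field v4)))"
  by (cases u rule: prod_cases4, cases v rule: prod_cases4) (simp add: algebra_simps)

lemma two_points:
  assumes z1: "z1 \<in> line_of u v" "z1 \<noteq> v0" and z2: "z2 \<in> line_of u v" "z2 \<noteq> v0"
    and ne: "pt z1 \<noteq> pt z2" and o1: "vdot w z1 = 0" and o2: "vdot w z2 = 0"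
  shows "vdot w u = 0 \<and> vdot w (v::'a::field v4) = 0"
proof -
  obtain a b where ab: "z1 = vadd (vsc a u) (vsc b v)" using z1 by (auto simp: mem_line)
  obtain c d where cd: "z2 = vadd (vsc c u) (vsc d v)" using z2 by (auto simp: mem_line)
  have e1: "a * vdot w u + b * vdot w v = 0" using o1 ab by simp
  have e2: "c * vdot w u + d * vdot w v = 0" using o2 cd by simp
  show ?thesis
  proof (cases "a*d = b*c")
    case False
    thus ?thesis using solve2[OF e1 e2] by simp
  next
    case True
    have n1: "(a,b) \<noteq> (0,0)"
    proof
      assume "(a,b) = (0,0)" hence "a = 0" "b = 0" by auto
      hence "z1 = v0" using ab zero_comb by metis
      thus False using z1(2) by simp
    qed
    have n2: "(c,d) \<noteq> (0,0)"
    proof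
      assume "(c,d) = (0,0)" hence "c = 0" "d = 0" by auto
      hence "z2 = v0" using cd zero_comb by metis
      thus False using z2(2) by simp
    qed
    obtain k where k: "k \<noteq> 0" "c = k*a" "d = k*b" using prop2[OF n1 n2 True] by blast
    have "z2 = vsc k z1" using ab cd k comb_scale by metis
    hence "pt z2 = pt z1" using pt_scale[OF k(1)] by simp
    thus ?thesis using ne by simp
  qed
qed


lemma goodl_line: "goodl l u v \<Longrightarrow> l = line_of u v" by (simp add: goodl_def)
lemma goodl_indep: "goodl l u v \<Longrightarrow> indep2 u v" by (simp add: goodl_def)
lemma goodl_noG: "goodl l u v \<Longrightarrow> G \<in> Gamma_planes \<Longrightarrow> \<not> l \<subseteq> G"
proof -
  assume "goodl l u v" "G \<in> Gamma_planes"
  from \<open>goodl l u v\<close> have "\<forall>G\<in>Gamma_planes. \<not> l \<subseteq> G" unfolding goodl_def by (elim conjE) assumption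
  thus ?thesis using \<open>G \<in> Gamma_planes\<close> by (rule bspec)
qed
lemma goodl_noC: "goodl l u v \<Longrightarrow> P \<in> twisted_cubic \<Longrightarrow> \<not> P \<subseteq> l"
proof -
  assume "goodl l u v" "P \<in> twisted_cubic"
  from \<open>goodl l u v\<close> have "\<forall>P\<in>twisted_cubic. \<not> P \<subseteq> l" unfolding goodl_def by (elim conjE) assumption
  thus ?thesis using \<open>P \<in> twisted_cubic\<close> by (rule bspec)
qed

lemma goodl_not_tangent_in:
  assumes g: "goodl l u v" and T: "T \<in> tangents" and uT: "u \<in> T" and vT: "v \<in> T"
  shows False
proof -
  obtain w where w: "plane_of w \<in> Gamma_planes" "T \<subseteq> plane_of w" using tangent_osc[OF T] by blast
  have "u \<in> plane_of w" "v \<in> plane_of w" using uT vT w(2) by blast+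
  hence "l \<subseteq> plane_of w" by (simp add: goodl_line[OF g] line_in_plane)
  thus False using goodl_noG[OF g w(1)] by blast
qed

lemma part2_core:
  assumes g: "goodl l u v" and T: "T \<in> tangents" and p: "p \<in> PG_points" "p \<subseteq> l" "p \<subseteq> T"
  shows "\<exists>\<pi>. two_C_plane \<pi> \<and> l \<subseteq> \<pi> \<and> \<pi> \<in> pencil T"
proof -
  obtain z where z: "p = pt z" "z \<noteq> v0" using p(1) by (auto simp: PG_points_def)
  have zl: "z \<in> line_of u v" using p(2) z(1) self_pt[of z] goodl_line[OF g] by blast
  have zT: "z \<in> T" using p(3) z(1) self_pt[of z] by blast
  obtain n1 n2 where n: "indep2 n1 n2" "\<forall>a b. T \<subseteq> plane_of (vadd (vsc a n1) (vsc b n2))"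
    using tangent_normals[OF T] by blast
  have "T \<subseteq> plane_of n1" using n(2)[rule_format, of 1 0]
    by (cases n1 rule: prod_cases4, cases n2 rule: prod_cases4) simp
  moreover have "T \<subseteq> plane_of n2" using n(2)[rule_format, of 0 1]
    by (cases n1 rule: prod_cases4, cases n2 rule: prod_cases4) simp
  ultimately have zn: "vdot n1 z = 0" "vdot n2 z = 0" using zT by (auto simp: mem_plane)
  obtain c where c: "c \<noteq> v0" "\<exists>a b. c = vadd (vsc a n1) (vsc b n2)" "vdot c u = 0" "vdot c v = 0"
    using plane_through[OF n(1) zl z(2) zn] by blast
  have Tc: "T \<subseteq> plane_of c" using c(2) n(2) by blast
  have lc: "l \<subseteq> plane_of c" using c goodl_line[OF g] by (simp add: line_sub_plane)
  have pen: "plane_of c \<in> pencil T" using plane_PG[OF c(1)] Tc by (simp add: pencil_def)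
  hence "plane_of c \<in> Gamma_planes \<or> two_C_plane (plane_of c)" using pencil_sub[OF T] by blast
  moreover have "plane_of c \<notin> Gamma_planes" using lc goodl_noG[OF g] by blast
  ultimately show ?thesis using lc pen by blast
qed

lemma intersect_point:
  assumes g: "goodl l u v" and T: "T \<in> tangents" and pi: "\<pi> \<in> pencil T" and l: "l \<subseteq> \<pi>"
  shows "\<exists>z. z \<noteq> v0 \<and> z \<in> l \<and> z \<in> T"
proof -
  obtain w where w: "plane_of w \<in> Gamma_planes" "T \<subseteq> plane_of w" using tangent_osc[OF T] by blast
  have lu: "l = line_of u v" and ind: "indep2 u v" using goodl_line[OF g] goodl_indep[OF g] by auto
  have nw: "\<not> (vdot w u = 0 \<and> vdot w v = 0)"
  proof
    assume "vdot w u = 0 \<and> vdot w v = 0"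
    hence "l \<subseteq> plane_of w" using lu by (simp add: line_sub_plane)
    thus False using goodl_noG[OF g w(1)] by blast
  qed
  define z where "z = vadd (vsc (vdot w v) u) (vsc (- vdot w u) v)"
  have zl: "z \<in> l" unfolding z_def lu mem_line by blast
  have z0: "z \<noteq> v0"
  proof
    assume "z = v0"
    hence "vdot w v = 0 \<and> - vdot w u = 0" using ind unfolding z_def indep2_def by blast
    thus False using nw by simp
  qed
  have zw: "z \<in> plane_of w" unfolding z_def mem_plane vdot_vadd_r vdot_vsc_r by (simp add: mult.commute)
  have wpen: "plane_of w \<in> pencil T" using w Gamma_PG by (simp add: pencil_def)
  have ne: "\<pi> \<noteq> plane_of w" using l goodl_noG[OF g w(1)] by blast
  have "z \<in> T" using meet[OF T pi wpen ne] zl l zw by blast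
  thus ?thesis using z0 zl by blast
qed

lemma unique_plane:
  assumes g: "goodl l u v" and T: "T \<in> tangents" and p1: "\<pi>1 \<in> pencil T" and p2: "\<pi>2 \<in> pencil T"
    and l1: "l \<subseteq> \<pi>1" and l2: "l \<subseteq> \<pi>2"
  shows "\<pi>1 = \<pi>2"
proof (rule ccontr)
  assume ne: "\<pi>1 \<noteq> \<pi>2"
  have "u \<in> l" "v \<in> l" using goodl_line[OF g] line_u line_v by blast+
  hence "u \<in> T" "v \<in> T" using meet[OF T p1 p2 ne] l1 l2 by blast+
  thus False using goodl_not_tangent_in[OF g T] by blast
qed


lemma pt_in_T: "T \<in> tangents \<Longrightarrow> z \<in> T \<Longrightarrow> pt z \<subseteq> (T::'a::field v4 set)"
  using tangent_line pt_sub_line by metis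

lemma count_Tpoints:
  assumes g: "goodl l u (v::'a::{field,finite} v4)"
  shows "card {p \<in> PG_points. T_point p \<and> p \<subseteq> l} = card {\<pi>. two_C_plane \<pi> \<and> l \<subseteq> \<pi>}"
proof -
  define S1 where "S1 = {p \<in> PG_points. T_point p \<and> p \<subseteq> l}"
  define S2 where "S2 = {\<pi>. two_C_plane \<pi> \<and> l \<subseteq> \<pi>}"
  define Q where "Q p \<pi> \<longleftrightarrow> two_C_plane \<pi> \<and> l \<subseteq> \<pi> \<and> (\<exists>T\<in>tangents. p \<subseteq> T \<and> \<pi> \<in> pencil T)" for p \<pi>
  define f where "f p = (SOME \<pi>. Q p \<pi>)" for p
  have Qf: "Q p (f p)" if "p \<in> S1" for p
  proof -
    from that obtain T where T: "T \<in> tangents" "p \<subseteq> T" and p: "p \<in> PG_points" "p \<subseteq> l"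
      by (auto simp: S1_def T_point_def)
    from part2_core[OF g T(1) p T(2)] obtain \<pi> where "two_C_plane \<pi> \<and> l \<subseteq> \<pi> \<and> \<pi> \<in> pencil T" by blast
    hence "Q p \<pi>" using T by (auto simp: Q_def)
    thus ?thesis unfolding f_def by (rule someI)
  qed
  have "bij_betw f S1 S2"
  proof (rule bij_betw_imageI)
    show "inj_on f S1"
    proof (rule inj_onI)
      fix p1 p2 assume p1: "p1 \<in> S1" and p2: "p2 \<in> S1" and eq: "f p1 = f p2"
      obtain T1 where T1: "T1 \<in> tangents" "p1 \<subseteq> T1" "f p1 \<in> pencil T1" using Qf[OF p1] by (auto simp: Q_def)
      obtain T2 where T2: "T2 \<in> tangents" "p2 \<subseteq> T2" "f p1 \<in> pencil T2" using Qf[OF p2] eq by (auto simp: Q_def)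
      have TT: "T1 = T2"
      proof (rule ccontr)
        assume "T1 \<noteq> T2"
        hence "pencil T1 \<inter> pencil T2 = {}" using pencil_disj T1(1) T2(1) by blast
        thus False using T1(3) T2(3) by blast
      qed
      show "p1 = p2"
      proof (rule ccontr)
        assume ne: "p1 \<noteq> p2"
        obtain z1 where z1: "p1 = pt z1" "z1 \<noteq> v0" using p1 by (auto simp: S1_def PG_points_def)
        obtain z2 where z2: "p2 = pt z2" "z2 \<noteq> v0" using p2 by (auto simp: S1_def PG_points_def)
        obtain w where w: "plane_of w \<in> Gamma_planes" "T1 \<subseteq> plane_of w" using tangent_osc[OF T1(1)] by blast
        have "z1 \<in> l" "z2 \<in> l" using p1 p2 z1 z2 self_pt unfolding S1_def by blast+
        hence zl: "z1 \<in> line_of u v" "z2 \<in> line_of u v" using goodl_line[OF g] by auto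
        have "z1 \<in> T1" "z2 \<in> T1" using T1(2) T2(2) TT z1 z2 self_pt by blast+
        hence "vdot w z1 = 0" "vdot w z2 = 0" using w(2) by (auto simp: mem_plane)
        hence "vdot w u = 0 \<and> vdot w v = 0"
          using two_points[OF zl(1) z1(2) zl(2) z2(2)] ne z1 z2 by blast
        hence "l \<subseteq> plane_of w" using goodl_line[OF g] by (simp add: line_sub_plane)
        thus False using goodl_noG[OF g w(1)] by blast
      qed
    qed
    show "f ` S1 = S2"
    proof
      show "f ` S1 \<subseteq> S2" using Qf by (auto simp: S2_def Q_def)
    next
      show "S2 \<subseteq> f ` S1"
      proof
        fix \<pi> assume "\<pi> \<in> S2"
        hence pi: "two_C_plane \<pi>" "l \<subseteq> \<pi>" by (auto simp: S2_def)
        obtain T where T: "T \<in> tangents" "T \<subseteq> \<pi>" using twoC_has_tangent[OF pi(1)] by blast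
        have piT: "\<pi> \<in> pencil T" using T pi(1) by (simp add: pencil_def two_C_plane_def)
        obtain z where z: "z \<noteq> v0" "z \<in> l" "z \<in> T" using intersect_point[OF g T(1) piT pi(2)] by blast
        define p where "p = pt z"
        have pPG: "p \<in> PG_points" unfolding p_def PG_points_def using z(1) by blast
        have pl: "p \<subseteq> l" using z(2) goodl_line[OF g] by (simp add: p_def pt_sub_line)
        have pT: "p \<subseteq> T" using pt_in_T[OF T(1) z(3)] by (simp add: p_def)
        have "p \<notin> twisted_cubic" using goodl_noC[OF g] pl by blast
        hence pS1: "p \<in> S1" using pPG pl pT T(1) by (auto simp: S1_def T_point_def)
        obtain T' where T': "T' \<in> tangents" "p \<subseteq> T'" "f p \<in> pencil T'" and fl: "l \<subseteq> f p"
          using Qf[OF pS1] by (auto simp: Q_def)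
        have "z \<in> T'" using T'(2) self_pt[of z] by (auto simp: p_def)
        have "T' = T"
        proof (rule ccontr)
          assume "T' \<noteq> T"
          hence "z = v0" using tangents_disj[OF T'(1) T(1)] \<open>z \<in> T'\<close> z(3) by blast
          thus False using z(1) by simp
        qed
        hence "f p = \<pi>" using unique_plane[OF g T(1) _ piT fl pi(2)] T'(3) by simp
        thus "\<pi> \<in> f ` S1" using pS1 by blast
      qed
    qed
  qed
  thus ?thesis unfolding S1_def S2_def by (rule bij_betw_same_card)
qed

lemma osc3: "(3::'a::field) = 0 \<Longrightarrow> osc_vec (s::'a) = (1,0,0,-(s^3))"
  by (simp add: osc_vec_def)

lemma cube_diff3: "(3::'a::field) = 0 \<Longrightarrow> (s - s')^3 = s^3 - (s'::'a)^3"
proof -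
  assume h: "(3::'a) = 0"
  have "(s - s')^3 = s^3 - 3*s^2*s' + 3*s*s'^2 - s'^3"
    by (simp add: algebra_simps power2_eq_square power3_eq_cube)
  thus ?thesis using h by simp
qed

lemma two_Gamma_meet:
  assumes h: "(3::'a::field) = 0" and G1: "G1 \<in> Gamma_planes" and G2: "G2 \<in> Gamma_planes" and ne: "G1 \<noteq> G2"
    and z: "(z0,z1,z2,z3) \<in> G1" "(z0,z1,z2,z3) \<in> G2"
  shows "z0 = 0 \<and> (z3::'a) = 0"
proof -
  have oo: "z0 = 0 \<and> z3 = 0" if "(z0,z1,z2,z3) \<in> osc_plane s" "(z0,z1,z2,z3) \<in> osc_plane s'" "s \<noteq> s'" for s s'
  proof -
    have e1: "z0 - s^3*z3 = 0" "z0 - s'^3*z3 = 0" using that(1,2) h by (auto simp: osc_plane_def mem_plane osc3)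
    have "(s^3 - s'^3) * z3 = 0" using e1 by (simp add: algebra_simps)
    hence "(s - s')^3 * z3 = 0" using cube_diff3[OF h, of s s'] by simp
    hence "z3 = 0" using that(3) by simp
    thus ?thesis using e1 by simp
  qed
  have oi: "z0 = 0 \<and> z3 = 0" if "(z0,z1,z2,z3) \<in> osc_plane s" "(z0,z1,z2,z3) \<in> osc_inf" for s
  proof -
    have "z3 = 0" using that(2) by (simp add: osc_inf_def mem_plane)
    moreover have "z0 - s^3*z3 = 0" using that(1) h by (auto simp: osc_plane_def mem_plane osc3)
    ultimately show ?thesis by simp
  qed
  show ?thesis
  proof (cases "G1 = osc_inf")
    case True
    with G2 ne obtain s where "G2 = osc_plane s" by (auto simp: Gamma_planes_def)
    thus ?thesis using oi z True by blast
  next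
    case False
    with G1 obtain s where s: "G1 = osc_plane s" by (auto simp: Gamma_planes_def)
    show ?thesis
    proof (cases "G2 = osc_inf")
      case True thus ?thesis using oi z s by blast
    next
      case False
      with G2 obtain s' where s': "G2 = osc_plane s'" by (auto simp: Gamma_planes_def)
      with s ne have "s \<noteq> s'" by blast
      thus ?thesis using oo z s s' by blast
    qed
  qed
qed

lemma cube_surj: "(3::'a::{field,finite}) = 0 \<Longrightarrow> \<exists>s::'a. s^3 = y"
proof -
  assume h: "(3::'a) = 0"
  have "inj (\<lambda>x::'a. x^3)"
  proof (rule injI)
    fix x y :: 'a assume "x^3 = y^3"
    hence "(x - y)^3 = 0" using cube_diff3[OF h] by simp
    thus "x = y" by simp
  qed
  hence "surj (\<lambda>x::'a. x^3)" using finite_UNIV_inj_surj[of "\<lambda>x::'a. x^3"] by simp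
  thus ?thesis by (metis surjD)
qed

lemma Gamma_of:
  assumes h: "(3::'a::{field,finite}) = 0" and ab: "(a,b) \<noteq> (0,(0::'a))"
  shows "plane_of (a,0,0,b) \<in> Gamma_planes"
proof (cases "a = 0")
  case True
  hence "b \<noteq> 0" using ab by simp
  have "(a,0,0,b) = vsc b (0,0,0,1)" using True by simp
  hence "plane_of (a,0,0,b) = osc_inf" using plane_scale[OF \<open>b \<noteq> 0\<close>, of "(0,0,0,1)"] by (simp add: osc_inf_def)
  thus ?thesis by (simp add: Gamma_planes_def)
next
  case False
  obtain s where s: "s^3 = -(b/a)" using cube_surj[OF h] by blast
  have "(a,0,0,b) = vsc a (osc_vec s)" using False s by (simp add: osc3[OF h])
  hence "plane_of (a,0,0,b) = osc_plane s" using plane_scale[OF False, of "osc_vec s"] by (simp add: osc_plane_def)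
  thus ?thesis by (simp add: Gamma_planes_def)
qed

lemma TO_card:
  assumes h: "(3::'a::{field,finite}) = 0" and g: "goodl l u (v::'a v4)"
    and p: "p \<in> PG_points" "p \<subseteq> l" and T: "T \<in> tangents" "p \<subseteq> T"
  shows "card {G \<in> Gamma_planes. p \<subseteq> G} = 1"
proof -
  obtain w where w: "plane_of w \<in> Gamma_planes" "T \<subseteq> plane_of w" using tangent_osc[OF T(1)] by blast
  obtain z where z: "p = pt z" "z \<noteq> v0" using p(1) by (auto simp: PG_points_def)
  have "{G \<in> Gamma_planes. p \<subseteq> G} = {plane_of w}"
  proof
    show "{plane_of w} \<subseteq> {G \<in> Gamma_planes. p \<subseteq> G}" using w T(2) by blast
  next
    show "{G \<in> Gamma_planes. p \<subseteq> G} \<subseteq> {plane_of w}"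
    proof
      fix G assume G: "G \<in> {G \<in> Gamma_planes. p \<subseteq> G}"
      show "G \<in> {plane_of w}"
      proof (rule ccontr)
        assume "G \<notin> {plane_of w}"
        hence ne: "G \<noteq> plane_of w" by simp
        obtain z0 z1 z2 z3 where zz: "z = (z0,z1,z2,z3)" by (cases z rule: prod_cases4)
        have "z \<in> G" "z \<in> plane_of w" using G T(2) w(2) z(1) self_pt[of z] by blast+
        hence zs: "z0 = 0 \<and> z3 = 0" using two_Gamma_meet[OF h _ w(1) ne] G zz by blast
        have zl: "z \<in> line_of u v" using p(2) z(1) self_pt[of z] goodl_line[OF g] by blast
        have ind: "indep2 (1,0,0,0) (0,0,0,1::'a)" by (simp add: indep2_def v0_eq)
        obtain c where c: "c \<noteq> v0" "\<exists>a b. c = vadd (vsc a (1,0,0,0)) (vsc b (0,0,0,1::'a))" "vdot c u = 0" "vdot c v = 0"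
          using plane_through[OF ind zl z(2)] zs zz by auto
        obtain a b where cab: "c = (a,0,0,b)" using c(2) by auto
        have "(a,b) \<noteq> (0,0)" using c(1) cab by (auto simp: v0_eq)
        hence "plane_of c \<in> Gamma_planes" using Gamma_of[OF h] cab by simp
        moreover have "l \<subseteq> plane_of c" using c goodl_line[OF g] by (simp add: line_sub_plane)
        ultimately show False using goodl_noG[OF g] by blast
      qed
    qed
  qed
  thus ?thesis by simp
qed

lemma EnGamma_goodl: "EnGamma emb l \<Longrightarrow> \<exists>u v. goodl l u v"
  unfolding EnGamma_def goodl_def PG_lines_def by blast


definition addG :: "'a::field monoid" where
  "addG = \<lparr>carrier = UNIV, monoid.mult = (+), one = 0\<rparr>"

lemma addG_group: "group (addG :: 'a::field monoid)"
proof (rule groupI)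
  fix x :: 'a
  show "\<exists>y\<in>carrier addG. y \<otimes>\<^bsub>addG\<^esub> x = \<one>\<^bsub>addG\<^esub>"
    by (rule bexI[of _ "-x"]) (auto simp: addG_def)
qed (auto simp: addG_def add.assoc)

lemma addG_pow: "x [^]\<^bsub>addG\<^esub> (n::nat) = of_nat n * (x::'a::field)"
  by (induction n) (auto simp: addG_def algebra_simps)

lemma char3:
  fixes dummy :: "'a::{field,finite}"
  assumes "CARD('a) mod 3 = 0"
  shows "(3::'a) = 0"
proof -
  interpret G: group "addG :: 'a monoid" by (rule addG_group)
  have o: "order (addG :: 'a monoid) = 3 ^ 1 * (CARD('a) div 3)"
    using assms by (simp add: order_def addG_def) (metis mod_eq_0_iff_dvd dvd_mult_div_cancel)
  interpret S: sylow "addG :: 'a monoid" 3 1 "CARD('a) div 3"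
      "{s. s \<subseteq> carrier (addG :: 'a monoid) \<and> card s = 3^1}"
      "{(N1, N2). N1 \<in> {s. s \<subseteq> carrier (addG :: 'a monoid) \<and> card s = 3^1} \<and> N2 \<in> {s. s \<subseteq> carrier (addG :: 'a monoid) \<and> card s = 3^1} \<and> (\<exists>g \<in> carrier addG. N1 = N2 #>\<^bsub>addG\<^esub> g)}"
    using o by unfold_locales (auto simp: addG_def)
  obtain H where H: "subgroup H (addG :: 'a monoid)" "card H = 3"
    using S.sylow_thm by auto
  then obtain h where h: "h \<in> H" "h \<noteq> 0"
  proof -
    have "\<not> H \<subseteq> {0}"
    proof
      assume "H \<subseteq> {0}"
      hence "card H \<le> card {0::'a}" by (intro card_mono) auto
      thus False using H(2) by simp
    qed
    thus ?thesis using that by blast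
  qed
  interpret HG: group "(addG :: 'a monoid)\<lparr>carrier := H\<rparr>"
    by (rule G.subgroup_imp_group[OF H(1)])
  have "h [^]\<^bsub>(addG :: 'a monoid)\<lparr>carrier := H\<rparr>\<^esub> order ((addG :: 'a monoid)\<lparr>carrier := H\<rparr>) = \<one>\<^bsub>(addG :: 'a monoid)\<lparr>carrier := H\<rparr>\<^esub>"
    by (rule HG.pow_order_eq_1) (simp add: h)
  hence "h [^]\<^bsub>addG\<^esub> (3::nat) = 0"
  proof -
    have "h [^]\<^bsub>(addG :: 'a monoid)\<lparr>carrier := H\<rparr>\<^esub> (3::nat) = 0"
      using \<open>h [^]\<^bsub>(addG :: 'a monoid)\<lparr>carrier := H\<rparr>\<^esub> order ((addG :: 'a monoid)\<lparr>carrier := H\<rparr>) = \<one>\<^bsub>(addG :: 'a monoid)\<lparr>carrier := H\<rparr>\<^esub>\<close> H(2)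
      by (simp add: order_def addG_def)
    thus ?thesis by (metis G.nat_pow_consistent)
  qed
  hence "3 * h = 0" by (simp add: addG_pow)
  thus ?thesis using h by simp
qed

theorem lemma3p3:
  fixes emb :: "'a::{field,finite} \<Rightarrow> 'b::{field,finite}"
  assumes q5: "CARD('a) \<ge> 5"
    and ext_card: "CARD('b) = CARD('a) ^ 2"
    and ext_emb: "field_emb emb"
  shows
   "(\<exists>PP :: 'a v4 set set set.
        card PP = CARD('a) + 1
      \<and> (\<forall>\<Pi>\<in>PP. \<forall>\<Pi>'\<in>PP. \<Pi> \<noteq> \<Pi>' \<longrightarrow> \<Pi> \<inter> \<Pi>' = {})
      \<and> \<Union>PP = Gamma_planes \<union> {\<pi>. two_C_plane \<pi>}
      \<and> (\<forall>\<Pi>\<in>PP. \<exists>T\<in>tangents. \<Pi> = pencil T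
            \<and> card (\<Pi> \<inter> Gamma_planes) = 1
            \<and> card (\<Pi> \<inter> {\<pi>. two_C_plane \<pi>}) = CARD('a)))
    \<and> (\<forall>l. EnGamma emb l \<longrightarrow>
         (\<forall>T\<in>tangents. \<forall>p\<in>PG_points. p \<subseteq> l \<and> p \<subseteq> T \<longrightarrow>
            (\<exists>\<pi>. two_C_plane \<pi> \<and> l \<subseteq> \<pi>)))
    \<and> (CARD('a) mod 3 \<noteq> 0 \<longrightarrow>
         (\<forall>l. EnGamma emb l \<and> (\<exists>\<pi>. two_C_plane \<pi> \<and> l \<subseteq> \<pi>) \<longrightarrow>
            (\<exists>T\<in>tangents. \<exists>p\<in>PG_points. p \<subseteq> l \<and> p \<subseteq> T)
          \<and> (\<forall>T\<in>tangents. \<forall>p\<in>PG_points. p \<subseteq> l \<and> p \<subseteq> T \<longrightarrow> T_point p)))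
    \<and> (CARD('a) mod 3 = 0 \<longrightarrow>
         (\<forall>l. EnGamma emb l \<and> (\<exists>\<pi>. two_C_plane \<pi> \<and> l \<subseteq> \<pi>) \<longrightarrow>
            (\<exists>T\<in>tangents. \<exists>p\<in>PG_points. p \<subseteq> l \<and> p \<subseteq> T)
          \<and> (\<forall>T\<in>tangents. \<forall>p\<in>PG_points. p \<subseteq> l \<and> p \<subseteq> T \<longrightarrow> TO_point p)))
    \<and> (\<forall>l. EnGamma emb l \<longrightarrow>
         (CARD('a) mod 3 \<noteq> 0 \<longrightarrow>
            card {p \<in> PG_points. T_point p \<and> p \<subseteq> l} = card {\<pi>. two_C_plane \<pi> \<and> l \<subseteq> \<pi>})
       \<and> (CARD('a) mod 3 = 0 \<longrightarrow>
            card {p \<in> PG_points. TO_point p \<and> p \<subseteq> l} = card {\<pi>. two_C_plane \<pi> \<and> l \<subseteq> \<pi>}))"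
proof -
  have Tp: "T_point p" if g: "goodl l u v" and p: "p \<in> PG_points" "p \<subseteq> l" and T: "T \<in> tangents" "p \<subseteq> T"
    for l u v p and T :: "'a v4 set"
  proof -
    have "p \<notin> twisted_cubic" using goodl_noC[OF g] p(2) by blast
    thus ?thesis using p T by (auto simp: T_point_def)
  qed
  have ex: "\<exists>T\<in>tangents. \<exists>p\<in>PG_points. p \<subseteq> l \<and> p \<subseteq> T"
    if g: "goodl l u v" and pi: "two_C_plane \<pi>" "l \<subseteq> \<pi>" for l u v and \<pi> :: "'a v4 set"
  proof -
    obtain T where T: "T \<in> tangents" "T \<subseteq> \<pi>" using twoC_has_tangent[OF pi(1)] by blast
    have piT: "\<pi> \<in> pencil T" using T pi(1) by (simp add: pencil_def two_C_plane_def)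
    obtain z where z: "z \<noteq> v0" "z \<in> l" "z \<in> T" using intersect_point[OF g T(1) piT pi(2)] by blast
    have pPG: "pt z \<in> PG_points" unfolding PG_points_def using z(1) by blast
    have pl: "pt z \<subseteq> l" using z(2) goodl_line[OF g] by (simp add: pt_sub_line)
    have pT: "pt z \<subseteq> T" using pt_in_T[OF T(1) z(3)] .
    show ?thesis using pPG pl pT T(1) by blast
  qed
  have TO: "TO_point p" if h: "(3::'a) = 0" and g: "goodl l u v" and p: "p \<in> PG_points" "p \<subseteq> l"
    and T: "T \<in> tangents" "p \<subseteq> T" for l u v p and T :: "'a v4 set"
    using Tp[OF g p T] TO_card[OF h g p T] by (simp add: TO_point_def)
  show ?thesis
  proof (intro conjI)
    show "\<exists>PP :: 'a v4 set set set.
        card PP = CARD('a) + 1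
      \<and> (\<forall>\<Pi>\<in>PP. \<forall>\<Pi>'\<in>PP. \<Pi> \<noteq> \<Pi>' \<longrightarrow> \<Pi> \<inter> \<Pi>' = {})
      \<and> \<Union>PP = Gamma_planes \<union> {\<pi>. two_C_plane \<pi>}
      \<and> (\<forall>\<Pi>\<in>PP. \<exists>T\<in>tangents. \<Pi> = pencil T
            \<and> card (\<Pi> \<inter> Gamma_planes) = 1
            \<and> card (\<Pi> \<inter> {\<pi>. two_C_plane \<pi>}) = CARD('a))" by (rule part1)
  next
    show "\<forall>l. EnGamma emb l \<longrightarrow>
         (\<forall>T\<in>tangents. \<forall>p\<in>PG_points. p \<subseteq> l \<and> p \<subseteq> T \<longrightarrow>
            (\<exists>\<pi>. two_C_plane \<pi> \<and> l \<subseteq> \<pi>))"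
    proof (intro allI impI ballI)
      fix l T p assume "EnGamma emb l" "T \<in> tangents" "p \<in> PG_points" "p \<subseteq> l \<and> p \<subseteq> T"
      moreover obtain u v where "goodl l u v" using EnGamma_goodl[OF \<open>EnGamma emb l\<close>] by blast
      ultimately show "\<exists>\<pi>. two_C_plane \<pi> \<and> l \<subseteq> \<pi>" using part2_core by blast
    qed
  next
    show "CARD('a) mod 3 \<noteq> 0 \<longrightarrow>
         (\<forall>l. EnGamma emb l \<and> (\<exists>\<pi>. two_C_plane \<pi> \<and> l \<subseteq> \<pi>) \<longrightarrow>
            (\<exists>T\<in>tangents. \<exists>p\<in>PG_points. p \<subseteq> l \<and> p \<subseteq> T)
          \<and> (\<forall>T\<in>tangents. \<forall>p\<in>PG_points. p \<subseteq> l \<and> p \<subseteq> T \<longrightarrow> T_point p))"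
    proof (intro impI allI conjI ballI)
      fix l assume a: "EnGamma emb l \<and> (\<exists>\<pi>. two_C_plane \<pi> \<and> l \<subseteq> \<pi>)"
      then obtain u v where g: "goodl l u v" using EnGamma_goodl by blast
      from a obtain \<pi> where "two_C_plane \<pi>" "l \<subseteq> \<pi>" by blast
      thus "\<exists>T\<in>tangents. \<exists>p\<in>PG_points. p \<subseteq> l \<and> p \<subseteq> T" using ex[OF g] by blast
      fix T p assume "T \<in> tangents" "p \<in> PG_points" "p \<subseteq> l \<and> p \<subseteq> T"
      thus "T_point p" using Tp[OF g] by blast
    qed
  next
    show "CARD('a) mod 3 = 0 \<longrightarrow>
         (\<forall>l. EnGamma emb l \<and> (\<exists>\<pi>. two_C_plane \<pi> \<and> l \<subseteq> \<pi>) \<longrightarrow>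
            (\<exists>T\<in>tangents. \<exists>p\<in>PG_points. p \<subseteq> l \<and> p \<subseteq> T)
          \<and> (\<forall>T\<in>tangents. \<forall>p\<in>PG_points. p \<subseteq> l \<and> p \<subseteq> T \<longrightarrow> TO_point p))"
    proof (intro impI allI conjI ballI)
      fix l assume m: "CARD('a) mod 3 = 0" and a: "EnGamma emb l \<and> (\<exists>\<pi>. two_C_plane \<pi> \<and> l \<subseteq> \<pi>)"
      have h: "(3::'a) = 0" using char3[OF m] .
      from a obtain u v where g: "goodl l u v" using EnGamma_goodl by blast
      from a obtain \<pi> where "two_C_plane \<pi>" "l \<subseteq> \<pi>" by blast
      thus "\<exists>T\<in>tangents. \<exists>p\<in>PG_points. p \<subseteq> l \<and> p \<subseteq> T" using ex[OF g] by blast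
      fix T p assume "T \<in> tangents" "p \<in> PG_points" "p \<subseteq> l \<and> p \<subseteq> T"
      thus "TO_point p" using TO[OF h g] by blast
    qed
  next
    show "\<forall>l. EnGamma emb l \<longrightarrow>
         (CARD('a) mod 3 \<noteq> 0 \<longrightarrow>
            card {p \<in> PG_points. T_point p \<and> p \<subseteq> l} = card {\<pi>. two_C_plane \<pi> \<and> l \<subseteq> \<pi>})
       \<and> (CARD('a) mod 3 = 0 \<longrightarrow>
            card {p \<in> PG_points. TO_point p \<and> p \<subseteq> l} = card {\<pi>. two_C_plane \<pi> \<and> l \<subseteq> \<pi>})"
    proof (intro allI impI conjI)
      fix l assume "EnGamma emb l"
      then obtain u v where g: "goodl l u v" using EnGamma_goodl by blast
      show "card {p \<in> PG_points. T_point p \<and> p \<subseteq> l} = card {\<pi>. two_C_plane \<pi> \<and> l \<subseteq> \<pi>}"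
        by (rule count_Tpoints[OF g])
      assume m: "CARD('a) mod 3 = 0"
      have h: "(3::'a) = 0" using char3[OF m] .
      have "{p \<in> PG_points. TO_point p \<and> p \<subseteq> l} = {p \<in> PG_points. T_point p \<and> p \<subseteq> l}"
      proof (rule Collect_cong)
        fix p
        show "(p \<in> PG_points \<and> TO_point p \<and> p \<subseteq> l) = (p \<in> PG_points \<and> T_point p \<and> p \<subseteq> l)"
        proof
          assume "p \<in> PG_points \<and> TO_point p \<and> p \<subseteq> l"
          thus "p \<in> PG_points \<and> T_point p \<and> p \<subseteq> l" by (simp add: TO_point_def)
        next
          assume a: "p \<in> PG_points \<and> T_point p \<and> p \<subseteq> l"
          then obtain T where "T \<in> tangents" "p \<subseteq> T" by (auto simp: T_point_def)
          thus "p \<in> PG_points \<and> TO_point p \<and> p \<subseteq> l" using TO[OF h g] a by blast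
        qed
      qed
      thus "card {p \<in> PG_points. TO_point p \<and> p \<subseteq> l} = card {\<pi>. two_C_plane \<pi> \<and> l \<subseteq> \<pi>}"
        using count_Tpoints[OF g] by simp
    qed
  qed
qed

end
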